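(* Let $\Lambda=\{z\in\mathbb C:\operatorname{Im}z>0\}$ with measure $d\mu(z)=\frac{da\,db}{4b^2}$ ($z=a+ib$), let $K(\tau;z,x)=\left(\frac{2i(x-z)(x-\overline z)}{z-\overline z}\right)^{\tau}$ for $\tau\in\mathbb C$, $x\in\mathbb R$ (positive base, principal power), and for $f\in C_c^\infty(\Lambda)$ let $Jf(\tau;x)=\int_\Lambda K(\tau;z,x)f(z)\,d\mu(z)$. For a function $\Phi$ on $\mathbb C\times\mathbb R$ and $r\in\mathbb Z$ let $T_+^r\Phi(\tau;x)=\Phi(\tau+r;x)$. Let $\Omega_n=\{(p,q)\in\mathbb Z^2:0\le p,q\le n,\ (p,q)\ne(n,n)\}$, let $\mathcal A$ be the sum over $n\ge0$ of the complex linear spans of $\frac{z^p\overline z^{\,q}}{(z-\overline z)^n}$, $(p,q)\in\Omega_n$, and let $\mathcal B$ be the space of differential operators on $\Lambda$ which are finite sums $$\sum V_{\alpha,\beta,\gamma,\alpha',\beta',\gamma'}(z,\overline z)\Bigl(z^2\tfrac{\partial}{\partial z}\Bigr)^{\alpha}\Bigl(z\tfrac{\partial}{\partial z}\Bigr)^{\beta}\Bigl(\tfrac{\partial}{\partial z}\Bigr)^{\gamma}\Bigl(\overline z^{\,2}\tfrac{\partial}{\partial \overline z}\Bigr)^{\alpha'}\Bigl(\overline z\tfrac{\partial}{\partial \overline z}\Bigr)^{\beta'}\Bigl(\tfrac{\partial}{\partial \overline z}\Bigr)^{\gamma'}$$ with $V_{\alpha,\beta,\gamma,\alpha',\beta',\gamma'}\in\mathcal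 A$. Then for every $D\in\mathcal B$ there is an operator of the form $$D'=\sum_{p\ge0,\ q\ge0,\ r\in\mathbb Z}U_{p,q,r}(\tau)\,x^p\frac{\partial^q}{\partial x^q}T_+^r \quad(\text{finite sum}),$$ where the $U_{p,q,r}$ are rational functions of $\tau$ whose only possible poles lie in $\frac12\mathbb Z$, such that $J(Df)(\tau;x)=(D'Jf)(\tau;x)$ for all $f\in C_c^\infty(\Lambda)$, $x\in\mathbb R$ and all $\tau$ that are not poles of the $U_{p,q,r}$.
   Context: $\frac{\partial}{\partial z}$, $\frac{\partial}{\partial\overline z}$ are the Wirtinger derivatives; in $U(\tau)x^p\frac{\partial^q}{\partial x^q}T_+^r$ the shift in $\tau$ is applied first, then the $x$-derivative, then multiplication by $x^pU(\tau)$. *)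

theory Defs
  imports "HOL-Analysis.Analysis" "HOL-Computational_Algebra.Polynomial"
begin

definition Lam :: "complex set" where
  "Lam = {z. Im z > 0}"

fun pdirs :: "complex list \<Rightarrow> (complex \<Rightarrow> complex) \<Rightarrow> (complex \<Rightarrow> complex)" where
  "pdirs [] f = f"
| "pdirs (v # vs) f = (\<lambda>z. frechet_derivative (pdirs vs f) (at z) v)"

definition smooth_on :: "complex set \<Rightarrow> (complex \<Rightarrow> complex) \<Rightarrow> bool" where
  "smooth_on U f \<longleftrightarrow> (\<forall>vs. \<forall>z\<in>U. pdirs vs f differentiable (at z))"

definition test_fun :: "(complex \<Rightarrow> complex) \<Rightarrow> bool" where
  "test_fun f \<longleftrightarrow> smooth_on Lam f \<and> (\<exists>C. compact C \<and> C \<subseteq> Lam \<and> (\<forall>z. z \<notin> C \<longrightarrow> f z = 0))"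

definition Dz :: "(complex \<Rightarrow> complex) \<Rightarrow> (complex \<Rightarrow> complex)" where
  "Dz f = (\<lambda>z. (frechet_derivative f (at z) 1 - \<i> * frechet_derivative f (at z) \<i>) / 2)"

definition Dzb :: "(complex \<Rightarrow> complex) \<Rightarrow> (complex \<Rightarrow> complex)" where
  "Dzb f = (\<lambda>z. (frechet_derivative f (at z) 1 + \<i> * frechet_derivative f (at z) \<i>) / 2)"

definition Kern :: "complex \<Rightarrow> complex \<Rightarrow> real \<Rightarrow> complex" where
  "Kern \<tau> z x = (2 * \<i> * (of_real x - z) * (of_real x - cnj z) / (z - cnj z)) powr \<tau>"

definition J :: "(complex \<Rightarrow> complex) \<Rightarrow> complex \<Rightarrow> real \<Rightarrow> complex" where
  "J f \<tau> x = integral Lam (\<lambda>z. Kern \<tau> z x * f z / of_real (4 * (Im z)\<^sup>2))"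

definition Omega :: "nat \<Rightarrow> (nat \<times> nat) set" where
  "Omega n = {(p, q). p \<le> n \<and> q \<le> n \<and> (p, q) \<noteq> (n, n)}"

definition A_space :: "(complex \<Rightarrow> complex) set" where
  "A_space = {V. \<exists>S c. finite S \<and> (\<forall>(n, p, q) \<in> S. (p, q) \<in> Omega n) \<and>
      V = (\<lambda>z. \<Sum>(n, p, q)\<in>S. c (n, p, q) * z ^ p * cnj z ^ q / (z - cnj z) ^ n)}"

definition opZ2 where "opZ2 f = (\<lambda>z. z\<^sup>2 * Dz f z)"
definition opZ1 where "opZ1 f = (\<lambda>z. z * Dz f z)"
definition opZ0 where "opZ0 f = Dz f"
definition opB2 where "opB2 f = (\<lambda>z. (cnj z)\<^sup>2 * Dzb f z)"
definition opB1 where "opB1 f = (\<lambda>z. cnj z * Dzb f z)"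
definition opB0 where "opB0 f = Dzb f"

definition mono_op :: "nat \<times> nat \<times> nat \<times> nat \<times> nat \<times> nat \<Rightarrow>
    (complex \<Rightarrow> complex) \<Rightarrow> (complex \<Rightarrow> complex)" where
  "mono_op i = (case i of (\<alpha>, \<beta>, \<gamma>, \<alpha>', \<beta>', \<gamma>') \<Rightarrow>
     (opZ2 ^^ \<alpha>) \<circ> (opZ1 ^^ \<beta>) \<circ> (opZ0 ^^ \<gamma>) \<circ> (opB2 ^^ \<alpha>') \<circ> (opB1 ^^ \<beta>') \<circ> (opB0 ^^ \<gamma>'))"

definition B_space :: "((complex \<Rightarrow> complex) \<Rightarrow> (complex \<Rightarrow> complex)) set" where
  "B_space = {D. \<exists>I V. finite I \<and> (\<forall>i\<in>I. V i \<in> A_space) \<and>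
      D = (\<lambda>f z. \<Sum>i\<in>I. V i z * mono_op i f z)}"

definition xderiv :: "nat \<Rightarrow> (real \<Rightarrow> complex) \<Rightarrow> (real \<Rightarrow> complex)" where
  "xderiv q g = ((\<lambda>h x. vector_derivative h (at x)) ^^ q) g"

text \<open>Rational function given as a reduced fraction P/Q; poles = roots of Q.\<close>
definition ratval :: "complex poly \<times> complex poly \<Rightarrow> complex \<Rightarrow> complex" where
  "ratval PQ \<tau> = poly (fst PQ) \<tau> / poly (snd PQ) \<tau>"

definition reduced_ratfun :: "complex poly \<times> complex poly \<Rightarrow> bool" where
  "reduced_ratfun PQ \<longleftrightarrow> snd PQ \<noteq> 0 \<and> coprime (fst PQ) (snd PQ)"

definition poles :: "complex poly \<times> complex poly \<Rightarrow> complex set" where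
  "poles PQ = {\<tau>. poly (snd PQ) \<tau> = 0}"

definition half_ints :: "complex set" where
  "half_ints = {of_int k / 2 | k. True}"

definition Dprime_apply ::
  "(nat \<times> nat \<times> int) set \<Rightarrow> (nat \<times> nat \<times> int \<Rightarrow> complex poly \<times> complex poly) \<Rightarrow>
   (complex \<Rightarrow> real \<Rightarrow> complex) \<Rightarrow> complex \<Rightarrow> real \<Rightarrow> complex" where
  "Dprime_apply S U \<Phi> \<tau> x =
     (\<Sum>(p, q, r)\<in>S. ratval (U (p, q, r)) \<tau> * of_real x ^ p * xderiv q (\<lambda>y. \<Phi> (\<tau> + of_int r) y) x)"

end

theory Submission
  imports Defs "HOL-Computational_Algebra.Fundamental_Theorem_Algebra"
begin


lemma half_ints_iff: "t \<in> half_ints \<longleftrightarrow> (\<exists>k::int. t = of_int k / 2)"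
  by (auto simp: half_ints_def)

lemma half_ints_shift[simp]: "t + of_int m \<in> half_ints \<longleftrightarrow> t \<in> half_ints"
proof
  assume "t + of_int m \<in> half_ints"
  then obtain k where "t + of_int m = of_int k / 2" by (auto simp: half_ints_iff)
  hence "t = of_int (k - 2*m) / 2" by (simp add: field_simps)
  thus "t \<in> half_ints" unfolding half_ints_iff by blast
next
  assume "t \<in> half_ints"
  then obtain k where "t = of_int k / 2" by (auto simp: half_ints_iff)
  hence "t + of_int m = of_int (k + 2*m) / 2" by (simp add: field_simps)
  thus "t + of_int m \<in> half_ints" unfolding half_ints_iff by blast
qed

definition nice :: "(complex \<Rightarrow> complex) \<Rightarrow> bool" where
  "nice u \<longleftrightarrow> (\<exists>P Q. Q \<noteq> 0 \<and> (\<forall>t. poly Q t = 0 \<longrightarrow> t \<in> half_ints) \<and>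
      (\<forall>t. t \<notin> half_ints \<longrightarrow> u t = poly P t / poly Q t))"

lemma nice_poly: "nice (\<lambda>t. poly p t)"
  unfolding nice_def by (rule exI[of _ p], rule exI[of _ 1]) auto

lemma nice_const: "nice (\<lambda>t. c)"
  using nice_poly[of "[:c:]"] by simp

lemma nice_add:
  assumes "nice u" "nice v" shows "nice (\<lambda>t. u t + v t)"
proof -
  obtain P1 Q1 where 1: "Q1 \<noteq> 0" "\<forall>t. poly Q1 t = 0 \<longrightarrow> t \<in> half_ints"
    "\<forall>t. t \<notin> half_ints \<longrightarrow> u t = poly P1 t / poly Q1 t" using assms(1) unfolding nice_def by blast
  obtain P2 Q2 where 2: "Q2 \<noteq> 0" "\<forall>t. poly Q2 t = 0 \<longrightarrow> t \<in> half_ints"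
    "\<forall>t. t \<notin> half_ints \<longrightarrow> v t = poly P2 t / poly Q2 t" using assms(2) unfolding nice_def by blast
  show ?thesis unfolding nice_def
  proof (intro exI conjI allI impI)
    show "Q1 * Q2 \<noteq> 0" using 1 2 by simp
    show "t \<in> half_ints" if "poly (Q1 * Q2) t = 0" for t using that 1 2 by auto
    show "u t + v t = poly (P1 * Q2 + P2 * Q1) t / poly (Q1 * Q2) t" if "t \<notin> half_ints" for t
    proof -
      have "poly Q1 t \<noteq> 0" "poly Q2 t \<noteq> 0" using 1 2 that by auto
      thus ?thesis using 1 2 that by (simp add: field_simps)
    qed
  qed
qed

lemma nice_mult:
  assumes "nice u" "nice v" shows "nice (\<lambda>t. u t * v t)"
proof -
  obtain P1 Q1 where 1: "Q1 \<noteq> 0" "\<forall>t. poly Q1 t = 0 \<longrightarrow> t \<in> half_ints"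
    "\<forall>t. t \<notin> half_ints \<longrightarrow> u t = poly P1 t / poly Q1 t" using assms(1) unfolding nice_def by blast
  obtain P2 Q2 where 2: "Q2 \<noteq> 0" "\<forall>t. poly Q2 t = 0 \<longrightarrow> t \<in> half_ints"
    "\<forall>t. t \<notin> half_ints \<longrightarrow> v t = poly P2 t / poly Q2 t" using assms(2) unfolding nice_def by blast
  show ?thesis unfolding nice_def
  proof (intro exI conjI allI impI)
    show "Q1 * Q2 \<noteq> 0" using 1 2 by simp
    show "t \<in> half_ints" if "poly (Q1 * Q2) t = 0" for t using that 1 2 by auto
    show "u t * v t = poly (P1 * P2) t / poly (Q1 * Q2) t" if "t \<notin> half_ints" for t
      using 1 2 that by simp
  qed
qed

lemma nice_shift:
  assumes "nice u" shows "nice (\<lambda>t. u (t + of_int m))"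
proof -
  obtain P Q where 1: "Q \<noteq> 0" "\<forall>t. poly Q t = 0 \<longrightarrow> t \<in> half_ints"
    "\<forall>t. t \<notin> half_ints \<longrightarrow> u t = poly P t / poly Q t" using assms unfolding nice_def by blast
  let ?s = "[:of_int m, 1:] :: complex poly"
  show ?thesis unfolding nice_def
  proof (intro exI conjI allI impI)
    show "pcompose Q ?s \<noteq> 0"
    proof
      assume "pcompose Q ?s = 0"
      have "poly Q t = 0" for t
      proof -
        have "poly (pcompose Q ?s) (t - of_int m) = 0" using \<open>pcompose Q ?s = 0\<close> by simp
        thus ?thesis by (simp add: poly_pcompose)
      qed
      hence "Q = 0" using poly_all_0_iff_0 by blast
      thus False using 1 by simp
    qed
    show "t \<in> half_ints" if "poly (pcompose Q ?s) t = 0" for t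
      using that 1 by (auto simp: poly_pcompose add.commute)
    show "u (t + of_int m) = poly (pcompose P ?s) t / poly (pcompose Q ?s) t" if "t \<notin> half_ints" for t
      using that 1 by (auto simp: poly_pcompose add.commute)
  qed
qed

lemma nice_inv1: "nice (\<lambda>t. 1 / (t + of_int k))"
  unfolding nice_def
proof (intro exI conjI allI impI)
  show "[:of_int k, 1:] \<noteq> (0::complex poly)" by simp
  show "t \<in> half_ints" if "poly [:of_int k, 1:] t = 0" for t
  proof -
    have "t = of_int (-2*k) / 2" using that by (simp add: algebra_simps eq_neg_iff_add_eq_0)
    thus ?thesis unfolding half_ints_iff by blast
  qed
  show "1 / (t + of_int k) = poly 1 t / poly [:of_int k, 1:] t" for t by (simp add: add.commute)
qed

lemma nice_inv2: "nice (\<lambda>t. 1 / (2 * t + of_int k))"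
  unfolding nice_def
proof (intro exI conjI allI impI)
  show "[:of_int k, 2:] \<noteq> (0::complex poly)" by simp
  show "t \<in> half_ints" if "poly [:of_int k, 2:] t = 0" for t
  proof -
    have "t = of_int (-k) / 2" using that by (simp add: field_simps eq_neg_iff_add_eq_0)
    thus ?thesis unfolding half_ints_iff by blast
  qed
  show "1 / (2 * t + of_int k) = poly 1 t / poly [:of_int k, 2:] t" for t :: complex by (simp add: algebra_simps)
qed

lemma nice_id: "nice (\<lambda>t. t)"
  using nice_poly[of "[:0,1:]"] by simp

section \<open>Formal D' operators as lists\<close>

type_synonym entry = "(complex \<Rightarrow> complex) \<times> nat \<times> nat \<times> int"

definition evalL :: "entry list \<Rightarrow> (complex \<Rightarrow> real \<Rightarrow> complex) \<Rightarrow> complex \<Rightarrow> real \<Rightarrow> complex" where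
  "evalL L \<Phi> \<tau> x = (\<Sum>(u,p,q,r)\<leftarrow>L. u \<tau> * of_real x ^ p * xderiv q (\<lambda>y. \<Phi> (\<tau> + of_int r) y) x)"

definition niceL :: "entry list \<Rightarrow> bool" where
  "niceL L \<longleftrightarrow> (\<forall>e\<in>set L. nice (fst e))"

lemma evalL_Nil[simp]: "evalL [] \<Phi> \<tau> x = 0" by (simp add: evalL_def)
lemma evalL_Cons[simp]: "evalL ((u,p,q,r) # L) \<Phi> \<tau> x =
   u \<tau> * of_real x ^ p * xderiv q (\<lambda>y. \<Phi> (\<tau> + of_int r) y) x + evalL L \<Phi> \<tau> x"
  by (simp add: evalL_def)
lemma evalL_append[simp]: "evalL (L1 @ L2) \<Phi> \<tau> x = evalL L1 \<Phi> \<tau> x + evalL L2 \<Phi> \<tau> x"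
  by (simp add: evalL_def)

lemma niceL_Nil[simp]: "niceL []" by (simp add: niceL_def)
lemma niceL_Cons[simp]: "niceL ((u,p,q,r) # L) \<longleftrightarrow> nice u \<and> niceL L" by (simp add: niceL_def)
lemma niceL_append[simp]: "niceL (L1 @ L2) \<longleftrightarrow> niceL L1 \<and> niceL L2" by (auto simp: niceL_def)

definition scaleL :: "(complex \<Rightarrow> complex) \<Rightarrow> entry list \<Rightarrow> entry list" where
  "scaleL c L = map (\<lambda>(u,p,q,r). (\<lambda>t. c t * u t, p, q, r)) L"
definition xmulL :: "nat \<Rightarrow> entry list \<Rightarrow> entry list" where
  "xmulL a L = map (\<lambda>(u,p,q,r). (u, p + a, q, r)) L"
definition shiftL :: "int \<Rightarrow> entry list \<Rightarrow> entry list" where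
  "shiftL m L = map (\<lambda>(u,p,q,r). (\<lambda>t. u (t + of_int m), p, q, r + m)) L"

lemma evalL_scaleL: "evalL (scaleL c L) \<Phi> \<tau> x = c \<tau> * evalL L \<Phi> \<tau> x"
  by (induction L) (auto simp: scaleL_def algebra_simps)
lemma evalL_xmulL: "evalL (xmulL a L) \<Phi> \<tau> x = of_real x ^ a * evalL L \<Phi> \<tau> x"
  by (induction L) (auto simp: xmulL_def algebra_simps power_add)
lemma evalL_shiftL: "evalL (shiftL m L) \<Phi> \<tau> x = evalL L \<Phi> (\<tau> + of_int m) x"
  by (induction L) (auto simp: shiftL_def algebra_simps)

lemma niceL_scaleL: "nice c \<Longrightarrow> niceL L \<Longrightarrow> niceL (scaleL c L)"
  by (induction L) (auto simp: scaleL_def intro: nice_mult)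
lemma niceL_xmulL: "niceL L \<Longrightarrow> niceL (xmulL a L)"
  by (induction L) (auto simp: xmulL_def)
lemma niceL_shiftL: "niceL L \<Longrightarrow> niceL (shiftL m L)"
  by (induction L) (auto simp: shiftL_def intro: nice_shift)

lemma xderiv_0[simp]: "xderiv 0 h = h" by (simp add: xderiv_def)
lemma xderiv_Suc: "xderiv (Suc q) h x = vector_derivative (xderiv q h) (at x)"
  by (simp add: xderiv_def)
lemma xderiv_xderiv: "xderiv q (xderiv m h) = xderiv (q + m) h"
  by (simp add: xderiv_def funpow_add)

definition smooth1 :: "(real \<Rightarrow> complex) \<Rightarrow> bool" where
  "smooth1 h \<longleftrightarrow> (\<forall>q x. (xderiv q h has_vector_derivative xderiv (Suc q) h x) (at x))"

definition dL :: "entry list \<Rightarrow> entry list" where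
  "dL L = concat (map (\<lambda>(u,p,q,r). [(\<lambda>t. of_nat p * u t, p - 1, q, r), (u, p, Suc q, r)]) L)"

lemma dL_Nil[simp]: "dL [] = []" by (simp add: dL_def)
lemma dL_Cons[simp]: "dL ((u,p,q,r) # L) = (\<lambda>t. of_nat p * u t, p - 1, q, r) # (u, p, Suc q, r) # dL L"
  by (simp add: dL_def)

lemma niceL_dL: "niceL L \<Longrightarrow> niceL (dL L)"
proof (induction L)
  case (Cons e L) thus ?case by (cases e) (auto intro: nice_mult nice_const)
qed simp

lemma niceL_dL_pow: "niceL L \<Longrightarrow> niceL ((dL ^^ n) L)"
  by (induction n) (auto intro: niceL_dL)

lemma has_vd_ofreal_pow:
  "((\<lambda>y. (of_real y :: complex) ^ p) has_vector_derivative (of_nat p * of_real x ^ (p - 1))) (at x)"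
proof -
  have "((\<lambda>y. of_real (y ^ p) :: complex) has_vector_derivative of_real (real p * x ^ (p - 1))) (at x)"
    by (intro has_vector_derivative_of_real) (auto intro!: derivative_eq_intros)
  thus ?thesis by simp
qed

lemma evalL_has_vd:
  assumes sm: "\<And>\<sigma>. smooth1 (\<Phi> \<sigma>)"
  shows "((\<lambda>y. evalL L \<Phi> \<tau> y) has_vector_derivative evalL (dL L) \<Phi> \<tau> x) (at x)"
proof (induction L)
  case Nil thus ?case by simp
next
  case (Cons e L)
  obtain u p q r where e: "e = (u,p,q,r)" by (cases e)
  have d1: "(xderiv q (\<lambda>y. \<Phi> (\<tau> + of_int r) y) has_vector_derivative
      xderiv (Suc q) (\<lambda>y. \<Phi> (\<tau> + of_int r) y) x) (at x)"
    using sm[of "\<tau> + of_int r"] unfolding smooth1_def by (simp add: eta_contract_eq)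
  have "((\<lambda>y. u \<tau> * ((of_real y) ^ p * xderiv q (\<lambda>y. \<Phi> (\<tau> + of_int r) y) y)) has_vector_derivative
     u \<tau> * (of_real x ^ p * xderiv (Suc q) (\<lambda>y. \<Phi> (\<tau> + of_int r) y) x +
       (of_nat p * of_real x ^ (p - 1)) * xderiv q (\<lambda>y. \<Phi> (\<tau> + of_int r) y) x)) (at x)"
    by (intro has_vector_derivative_mult_right has_vector_derivative_mult has_vd_ofreal_pow d1)
  hence "((\<lambda>y. u \<tau> * (of_real y) ^ p * xderiv q (\<lambda>y. \<Phi> (\<tau> + of_int r) y) y) has_vector_derivative
     (of_nat p * u \<tau>) * of_real x ^ (p - 1) * xderiv q (\<lambda>y. \<Phi> (\<tau> + of_int r) y) x +
      u \<tau> * of_real x ^ p * xderiv (Suc q) (\<lambda>y. \<Phi> (\<tau> + of_int r) y) x) (at x)"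
    by (simp add: algebra_simps)
  from has_vector_derivative_add[OF this Cons.IH] show ?case
    by (simp add: e algebra_simps)
qed

lemma evalL_xderiv:
  assumes sm: "\<And>\<sigma>. smooth1 (\<Phi> \<sigma>)"
  shows "xderiv q (\<lambda>y. evalL L \<Phi> \<tau> y) = (\<lambda>y. evalL ((dL ^^ q) L) \<Phi> \<tau> y)"
proof (induction q)
  case 0 thus ?case by simp
next
  case (Suc q)
  show ?case
  proof
    fix x
    have "xderiv (Suc q) (\<lambda>y. evalL L \<Phi> \<tau> y) x = vector_derivative (\<lambda>y. evalL ((dL ^^ q) L) \<Phi> \<tau> y) (at x)"
      by (simp add: xderiv_Suc Suc.IH)
    also have "\<dots> = evalL (dL ((dL ^^ q) L)) \<Phi> \<tau> x"
      by (rule vector_derivative_at[OF evalL_has_vd[OF sm]])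
    finally show "xderiv (Suc q) (\<lambda>y. evalL L \<Phi> \<tau> y) x = evalL ((dL ^^ Suc q) L) \<Phi> \<tau> x" by simp
  qed
qed

definition compE :: "entry \<Rightarrow> entry \<Rightarrow> entry" where
  "compE e1 e2 = (case e1 of (u1,p1,q1,r1) \<Rightarrow> case e2 of (u2,p2,q2,r2) \<Rightarrow>
      (\<lambda>t. u1 t * u2 (t + of_int r1), p1 + p2, q2, r1 + r2))"

definition compL :: "entry list \<Rightarrow> entry list \<Rightarrow> entry list" where
  "compL L1 L2 = concat (map (\<lambda>e1. map (compE e1) ((dL ^^ (fst (snd (snd e1)))) L2)) L1)"

lemma evalL_compE:
  "evalL (map (compE (u1,p1,q1,r1)) L) \<Phi> \<tau> x = u1 \<tau> * of_real x ^ p1 * evalL L \<Phi> (\<tau> + of_int r1) x"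
proof (induction L)
  case (Cons e L) thus ?case by (cases e) (simp add: compE_def algebra_simps power_add)
qed simp

lemma evalL_comp:
  assumes sm: "\<And>\<sigma>. smooth1 (\<Phi> \<sigma>)"
  shows "evalL L1 (\<lambda>\<sigma> y. evalL L2 \<Phi> \<sigma> y) \<tau> x = evalL (compL L1 L2) \<Phi> \<tau> x"
proof (induction L1)
  case Nil thus ?case by (simp add: compL_def)
next
  case (Cons e L1)
  obtain u p q r where e: "e = (u,p,q,r)" by (cases e)
  have "compL (e # L1) L2 = map (compE e) ((dL ^^ q) L2) @ compL L1 L2"
    by (simp add: compL_def e)
  thus ?case using Cons.IH
    by (simp add: e evalL_compE evalL_xderiv[OF sm])
qed

lemma niceL_compL: "niceL L1 \<Longrightarrow> niceL L2 \<Longrightarrow> niceL (compL L1 L2)"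
proof (induction L1)
  case Nil thus ?case by (simp add: compL_def)
next
  case (Cons e L1)
  obtain u p q r where e: "e = (u,p,q,r)" by (cases e)
  have n: "niceL ((dL ^^ q) L2)" using Cons.prems niceL_dL_pow by blast
  have "niceL (map (compE e) M)" if "niceL M" for M using that
  proof (induction M)
    case (Cons f M) thus ?case using Cons.prems Cons.IH \<open>niceL (e # L1)\<close>
      by (cases f) (auto simp: e compE_def intro!: nice_mult nice_shift)
  qed simp
  hence "niceL (map (compE e) ((dL ^^ q) L2))" using n by blast
  moreover have "compL (e # L1) L2 = map (compE e) ((dL ^^ q) L2) @ compL L1 L2"
    by (simp add: compL_def e)
  moreover have "niceL L1" using Cons.prems by (simp add: e)
  ultimately show ?case using Cons by simp
qed

lemma evalL_cong:
  assumes "\<And>u p q r. (u,p,q,r) \<in> set L \<Longrightarrow> \<Phi> (\<tau> + of_int r) = \<Psi> (\<tau> + of_int r)"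
  shows "evalL L \<Phi> \<tau> x = evalL L \<Psi> \<tau> x"
  using assms
proof (induction L)
  case (Cons e L)
  obtain u p q r where e: "e = (u,p,q,r)" by (cases e)
  have "\<Phi> (\<tau> + of_int r) = \<Psi> (\<tau> + of_int r)" using Cons.prems e by auto
  moreover have "evalL L \<Phi> \<tau> x = evalL L \<Psi> \<tau> x" using Cons by auto
  ultimately show ?case by (simp add: e eta_contract_eq)
qed simp

section \<open>Representability at the level of J\<close>

definition JR :: "((complex \<Rightarrow> complex) \<Rightarrow> complex \<Rightarrow> real \<Rightarrow> complex) \<Rightarrow> bool" where
  "JR F \<longleftrightarrow> (\<exists>L. niceL L \<and> (\<forall>g \<tau> x. test_fun g \<longrightarrow> \<tau> \<notin> half_ints \<longrightarrow> F g \<tau> x = evalL L (J g) \<tau> x))"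

lemma JR_J: "JR (\<lambda>g. J g)"
  unfolding JR_def
  by (rule exI[of _ "[(\<lambda>_. 1, 0, 0, 0)]"]) (auto intro: nice_const simp: eta_contract_eq)

lemma JR_zero: "JR (\<lambda>g \<tau> x. 0)"
  unfolding JR_def by (rule exI[of _ "[]"]) simp

lemma JR_add: "JR F1 \<Longrightarrow> JR F2 \<Longrightarrow> JR (\<lambda>g \<tau> x. F1 g \<tau> x + F2 g \<tau> x)"
  unfolding JR_def
  apply (elim exE conjE)
  subgoal for L1 L2 by (rule exI[of _ "L1 @ L2"]) auto
  done

lemma JR_sum: "finite I \<Longrightarrow> (\<And>i. i \<in> I \<Longrightarrow> JR (F i)) \<Longrightarrow> JR (\<lambda>g \<tau> x. \<Sum>i\<in>I. F i g \<tau> x)"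
proof (induction I rule: finite_induct)
  case empty thus ?case by (simp add: JR_zero)
next
  case (insert i I)
  thus ?case by (simp add: JR_add)
qed

lemma JR_scale: "nice c \<Longrightarrow> JR F \<Longrightarrow> JR (\<lambda>g \<tau> x. c \<tau> * F g \<tau> x)"
  unfolding JR_def
  apply (elim exE conjE)
  subgoal for L by (rule exI[of _ "scaleL c L"]) (auto simp: evalL_scaleL niceL_scaleL)
  done

lemma JR_xmul: "JR F \<Longrightarrow> JR (\<lambda>g \<tau> x. of_real x ^ a * F g \<tau> x)"
  unfolding JR_def
  apply (elim exE conjE)
  subgoal for L by (rule exI[of _ "xmulL a L"]) (auto simp: evalL_xmulL niceL_xmulL)
  done

lemma JR_shift: "JR F \<Longrightarrow> JR (\<lambda>g \<tau> x. F g (\<tau> + of_int m) x)"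
  unfolding JR_def
  apply (elim exE conjE)
  subgoal for L by (rule exI[of _ "shiftL m L"]) (auto simp: evalL_shiftL niceL_shiftL)
  done

lemma JR_cong: "JR F \<Longrightarrow> (\<And>g \<tau> x. test_fun g \<Longrightarrow> \<tau> \<notin> half_ints \<Longrightarrow> F g \<tau> x = F' g \<tau> x) \<Longrightarrow> JR F'"
  unfolding JR_def by metis

lemma JR_comp:
  assumes F: "JR F" and G: "JR (\<lambda>g. J (T g))" and T: "\<And>g. test_fun g \<Longrightarrow> test_fun (T g)"
    and sm: "\<And>g \<sigma>. test_fun g \<Longrightarrow> smooth1 (J g \<sigma>)"
  shows "JR (\<lambda>g. F (T g))"
proof -
  obtain L1 where L1: "niceL L1" "\<And>g \<tau> x. test_fun g \<Longrightarrow> \<tau> \<notin> half_ints \<Longrightarrow> F g \<tau> x = evalL L1 (J g) \<tau> x"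
    using F unfolding JR_def by blast
  obtain L2 where L2: "niceL L2" "\<And>g \<tau> x. test_fun g \<Longrightarrow> \<tau> \<notin> half_ints \<Longrightarrow> J (T g) \<tau> x = evalL L2 (J g) \<tau> x"
    using G unfolding JR_def by blast
  show ?thesis unfolding JR_def
  proof (intro exI conjI allI impI)
    show "niceL (compL L1 L2)" by (rule niceL_compL[OF L1(1) L2(1)])
    fix g \<tau> x assume g: "test_fun g" and t: "\<tau> \<notin> half_ints"
    have "F (T g) \<tau> x = evalL L1 (J (T g)) \<tau> x" using L1(2)[OF T[OF g] t] .
    also have "\<dots> = evalL L1 (\<lambda>\<sigma> y. evalL L2 (J g) \<sigma> y) \<tau> x"
      by (rule evalL_cong) (use t L2(2)[OF g] in auto)
    also have "\<dots> = evalL (compL L1 L2) (J g) \<tau> x"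
      by (rule evalL_comp) (rule sm[OF g])
    finally show "F (T g) \<tau> x = evalL (compL L1 L2) (J g) \<tau> x" .
  qed
qed


lemma open_Lam: "open Lam"
  unfolding Lam_def by (rule open_halfspace_Im_gt)

definition wv :: "complex \<Rightarrow> real \<Rightarrow> real" where
  "wv z x = ((x - Re z)^2 + (Im z)^2) / Im z"

definition kk :: "complex \<Rightarrow> complex \<Rightarrow> real \<Rightarrow> complex" where
  "kk \<sigma> z x = exp (\<sigma> * of_real (ln (wv z x)))"

lemma wv_pos: "Im z > 0 \<Longrightarrow> wv z x > 0"
  unfolding wv_def by (intro divide_pos_pos add_nonneg_pos) auto

lemma Kern_eq: assumes "Im z > 0" shows "Kern \<sigma> z x = kk \<sigma> z x"
proof -
  have 1: "(of_real x - z) * (of_real x - cnj z) = of_real ((x - Re z)^2 + (Im z)^2)"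
    by (simp add: complex_eq_iff power2_eq_square algebra_simps)
  have 2: "z - cnj z = 2 * \<i> * of_real (Im z)"
    by (simp add: complex_eq_iff)
  have "2 * \<i> * (of_real x - z) * (of_real x - cnj z) / (z - cnj z) = of_real (wv z x)"
    using assms unfolding 2 wv_def mult.assoc 1 by (simp add: field_simps)
  moreover have "wv z x \<noteq> 0" using wv_pos[OF assms] by (metis less_irrefl)
  hence "of_real (wv z x) \<noteq> (0::complex)" by simp
  ultimately show ?thesis
    unfolding Kern_def kk_def powr_def using Ln_of_real[OF wv_pos[OF assms]] by simp
qed

lemma kk_Suc: assumes "Im z > 0" shows "kk (\<sigma> + 1) z x = of_real (wv z x) * kk \<sigma> z x"
proof -
  have "exp (of_real (ln (wv z x))) = (of_real (wv z x) :: complex)"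
    using wv_pos[OF assms] by (simp flip: of_real_exp)
  thus ?thesis unfolding kk_def by (simp add: distrib_right exp_add mult.commute)
qed

lemma kk_minus1: assumes "Im z > 0" shows "kk \<sigma> z x = of_real (wv z x) * kk (\<sigma> - 1) z x"
  using kk_Suc[OF assms, of "\<sigma> - 1"] by simp

definition wx :: "complex \<Rightarrow> real \<Rightarrow> real" where
  "wx z x = 2 * (x - Re z) / Im z"

lemma wv_has_deriv: "Im z > 0 \<Longrightarrow> ((\<lambda>y. wv z y) has_real_derivative wx z x) (at x)"
  unfolding wv_def wx_def by (auto intro!: derivative_eq_intros simp: field_simps power2_eq_square)

lemma kk_has_vd:
  assumes "Im z > 0"
  shows "((\<lambda>y. kk \<sigma> z y) has_vector_derivative \<sigma> * of_real (wx z x) * kk (\<sigma> - 1) z x) (at x)"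
proof -
  have pos: "wv z x > 0" using wv_pos[OF assms] .
  have d: "((\<lambda>y. \<sigma> * of_real (ln (wv z y))) has_vector_derivative \<sigma> * of_real (wx z x / wv z x)) (at x)"
    by (intro has_vector_derivative_mult_right has_vector_derivative_of_real)
       (auto intro!: derivative_eq_intros wv_has_deriv assms pos simp: field_simps)
  have "((exp \<circ> (\<lambda>y. \<sigma> * of_real (ln (wv z y)))) has_vector_derivative
      (\<sigma> * of_real (wx z x / wv z x)) * exp (\<sigma> * of_real (ln (wv z x)))) (at x)"
    by (rule field_vector_diff_chain_at[OF d]) (rule DERIV_exp)
  hence "((\<lambda>y. exp (\<sigma> * of_real (ln (wv z y)))) has_vector_derivative
      exp (\<sigma> * of_real (ln (wv z x))) * (\<sigma> * of_real (wx z x / wv z x))) (at x)"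
    by (simp add: o_def mult.commute)
  moreover have "exp (\<sigma> * of_real (ln (wv z x))) * (\<sigma> * of_real (wx z x / wv z x))
      = \<sigma> * of_real (wx z x) * kk (\<sigma> - 1) z x"
    using kk_minus1[OF assms, of \<sigma> x] pos unfolding kk_def[symmetric]
    by (simp add: field_simps)
  ultimately show ?thesis unfolding kk_def by simp
qed

type_synonym kentry = "(complex \<Rightarrow> complex \<Rightarrow> complex) \<times> nat \<times> nat"

definition evK :: "kentry list \<Rightarrow> complex \<Rightarrow> complex \<Rightarrow> real \<Rightarrow> complex" where
  "evK Ls \<sigma> z x = (\<Sum>(c,a,j)\<leftarrow>Ls. c \<sigma> z * of_real x ^ a * kk (\<sigma> - of_nat j) z x)"

definition contL :: "kentry list \<Rightarrow> bool" where
  "contL Ls \<longleftrightarrow> (\<forall>e\<in>set Ls. continuous_on (UNIV \<times> Lam) (\<lambda>(\<sigma>,z). fst e \<sigma> z))"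

definition dK :: "kentry list \<Rightarrow> kentry list" where
  "dK Ls = concat (map (\<lambda>(c,a,j). [(\<lambda>\<sigma> z. c \<sigma> z * of_nat a, a - 1, j),
    (\<lambda>\<sigma> z. c \<sigma> z * (\<sigma> - of_nat j) * 2 / of_real (Im z), a + 1, j + 1),
    (\<lambda>\<sigma> z. - (c \<sigma> z * (\<sigma> - of_nat j) * 2 * of_real (Re z) / of_real (Im z)), a, j + 1)]) Ls)"

lemma evK_Nil[simp]: "evK [] \<sigma> z x = 0" by (simp add: evK_def)
lemma evK_Cons[simp]: "evK ((c,a,j) # Ls) \<sigma> z x = c \<sigma> z * of_real x ^ a * kk (\<sigma> - of_nat j) z x + evK Ls \<sigma> z x"
  by (simp add: evK_def)
lemma contL_Nil[simp]: "contL []" by (simp add: contL_def)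
lemma contL_Cons[simp]: "contL ((c,a,j) # Ls) \<longleftrightarrow> continuous_on (UNIV \<times> Lam) (\<lambda>(\<sigma>,z). c \<sigma> z) \<and> contL Ls"
  by (simp add: contL_def)
lemma dK_Nil[simp]: "dK [] = []" by (simp add: dK_def)
lemma dK_Cons[simp]: "dK ((c,a,j) # Ls) = [(\<lambda>\<sigma> z. c \<sigma> z * of_nat a, a - 1, j),
    (\<lambda>\<sigma> z. c \<sigma> z * (\<sigma> - of_nat j) * 2 / of_real (Im z), a + 1, j + 1),
    (\<lambda>\<sigma> z. - (c \<sigma> z * (\<sigma> - of_nat j) * 2 * of_real (Re z) / of_real (Im z)), a, j + 1)] @ dK Ls"
  by (simp add: dK_def)

lemma evK_append[simp]: "evK (L1 @ L2) \<sigma> z x = evK L1 \<sigma> z x + evK L2 \<sigma> z x"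
  by (simp add: evK_def)

lemma evK_has_vd:
  assumes "Im z > 0"
  shows "((\<lambda>y. evK Ls \<sigma> z y) has_vector_derivative evK (dK Ls) \<sigma> z x) (at x)"
proof (induction Ls)
  case Nil thus ?case by simp
next
  case (Cons e Ls)
  obtain c a j where e: "e = (c,a,j)" by (cases e)
  define K0 where "K0 = kk (\<sigma> - of_nat j) z x"
  define K1 where "K1 = kk (\<sigma> - of_nat (Suc j)) z x"
  have k1: "kk (\<sigma> - of_nat j - 1) z x = K1" by (simp add: K1_def algebra_simps)
  have D: "((\<lambda>y. c \<sigma> z * (of_real y ^ a * kk (\<sigma> - of_nat j) z y)) has_vector_derivative
     c \<sigma> z * (of_real x ^ a * ((\<sigma> - of_nat j) * of_real (wx z x) * kk (\<sigma> - of_nat j - 1) z x) +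
        (of_nat a * of_real x ^ (a - 1)) * kk (\<sigma> - of_nat j) z x)) (at x)"
    by (intro has_vector_derivative_mult_right has_vector_derivative_mult has_vd_ofreal_pow kk_has_vd assms)
  have ev: "evK (dK [e]) \<sigma> z x = c \<sigma> z * of_nat a * of_real x^(a-1) * K0
     + c \<sigma> z * (\<sigma> - of_nat j) * 2 / of_real (Im z) * of_real x^(a+1) * K1
     + (- (c \<sigma> z * (\<sigma> - of_nat j) * 2 * of_real (Re z) / of_real (Im z))) * of_real x ^ a * K1"
    by (simp add: e K0_def K1_def)
  have "Im z \<noteq> 0" using assms by simp
  hence "c \<sigma> z * (of_real x ^ a * ((\<sigma> - of_nat j) * of_real (wx z x) * K1) +
        (of_nat a * of_real x ^ (a - 1)) * K0) = evK (dK [e]) \<sigma> z x"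
    unfolding ev by (simp add: wx_def field_simps)
  with D have "((\<lambda>y. c \<sigma> z * of_real y ^ a * kk (\<sigma> - of_nat j) z y) has_vector_derivative
     evK (dK [e]) \<sigma> z x) (at x)"
    unfolding k1 K0_def[symmetric] by (simp add: mult.assoc)
  from has_vector_derivative_add[OF this Cons.IH]
  have H: "((\<lambda>y. c \<sigma> z * of_real y ^ a * kk (\<sigma> - of_nat j) z y + evK Ls \<sigma> z y) has_vector_derivative
     evK (dK [e]) \<sigma> z x + evK (dK Ls) \<sigma> z x) (at x)" .
  have 1: "evK (dK (e # Ls)) \<sigma> z x = evK (dK [e]) \<sigma> z x + evK (dK Ls) \<sigma> z x"
    by (simp add: e)
  have 2: "(\<lambda>y. evK (e # Ls) \<sigma> z y) = (\<lambda>y. c \<sigma> z * of_real y ^ a * kk (\<sigma> - of_nat j) z y + evK Ls \<sigma> z y)"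
    by (simp add: e)
  show ?case unfolding 1 2 by (rule H)
qed

lemma contL_dK: "contL Ls \<Longrightarrow> contL (dK Ls)"
proof (induction Ls)
  case (Cons e Ls)
  obtain c a j where e: "e = (c,a,j)" by (cases e)
  have c: "continuous_on (UNIV \<times> Lam) (\<lambda>(\<sigma>,z). c \<sigma> z)" using Cons.prems e by simp
  have c': "continuous_on (UNIV \<times> Lam) (\<lambda>p. c (fst p) (snd p))"
    using c by (simp add: case_prod_beta)
  have nz: "\<forall>p\<in>UNIV \<times> Lam. (of_real (Im (snd p)) :: complex) \<noteq> 0"
    by (auto simp: Lam_def)
  have "continuous_on (UNIV \<times> Lam) (\<lambda>p. c (fst p) (snd p) * of_nat a)"
    by (intro continuous_intros c')
  moreover have "continuous_on (UNIV \<times> Lam) (\<lambda>p. c (fst p) (snd p) * (fst p - of_nat j) * 2 / of_real (Im (snd p)))"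
    by (intro continuous_intros c' nz)
  moreover have "continuous_on (UNIV \<times> Lam) (\<lambda>p. - (c (fst p) (snd p) * (fst p - of_nat j) * 2 * of_real (Re (snd p)) / of_real (Im (snd p))))"
    by (intro continuous_intros c' nz)
  ultimately show ?case using Cons by (simp add: e case_prod_beta)
qed simp

lemma kk_cont: "continuous_on (UNIV \<times> (Lam \<times> UNIV)) (\<lambda>p. kk (fst p - s) (fst (snd p)) (snd (snd p)))"
proof -
  have nz: "\<forall>p\<in>UNIV \<times> (Lam \<times> UNIV). Im (fst (snd p)) \<noteq> 0" by (auto simp: Lam_def)
  have nz2: "\<forall>p\<in>UNIV \<times> (Lam \<times> UNIV). wv (fst (snd p)) (snd (snd p)) \<noteq> 0"
    using wv_pos by (auto simp: Lam_def) (metis less_irrefl)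
  have w: "continuous_on (UNIV \<times> (Lam \<times> UNIV)) (\<lambda>p. wv (fst (snd p)) (snd (snd p)))"
    unfolding wv_def by (intro continuous_intros nz)
  show ?thesis unfolding kk_def
    by (intro continuous_intros w nz2)
qed

lemma evK_cont:
  assumes "contL Ls"
  shows "continuous_on (UNIV \<times> (Lam \<times> UNIV)) (\<lambda>p. evK Ls (fst p) (fst (snd p)) (snd (snd p)))"
  using assms
proof (induction Ls)
  case Nil thus ?case by (simp add: continuous_on_const)
next
  case (Cons e Ls)
  obtain c a j where e: "e = (c,a,j)" by (cases e)
  have c: "continuous_on (UNIV \<times> Lam) (\<lambda>(\<sigma>,z). c \<sigma> z)" using Cons.prems e by simp
  have c': "continuous_on (UNIV \<times> (Lam \<times> UNIV)) (\<lambda>p. c (fst p) (fst (snd p)))"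
  proof -
    have "continuous_on (UNIV \<times> (Lam \<times> UNIV)) (\<lambda>p. (\<lambda>(\<sigma>,z). c \<sigma> z) (fst p, fst (snd p)))"
      by (rule continuous_on_compose2[OF c]) (auto intro!: continuous_intros)
    thus ?thesis by simp
  qed
  have "continuous_on (UNIV \<times> (Lam \<times> UNIV)) (\<lambda>p. c (fst p) (fst (snd p)) * of_real (snd (snd p)) ^ a *
      kk (fst p - of_nat j) (fst (snd p)) (snd (snd p)))"
    by (intro continuous_intros c' kk_cont)
  moreover have "contL Ls" using Cons.prems e by simp
  ultimately show ?case using Cons.IH by (simp add: e continuous_on_add)
qed

lemma evK_cont_x:
  assumes "contL Ls"
  shows "continuous_on (UNIV \<times> Lam) (\<lambda>(x,z). evK Ls \<sigma> z x)"
proof -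
  have "continuous_on (UNIV \<times> Lam) (\<lambda>q. (\<lambda>p. evK Ls (fst p) (fst (snd p)) (snd (snd p))) (\<sigma>, snd q, fst q))"
    by (rule continuous_on_compose2[OF evK_cont[OF assms]]) (auto intro!: continuous_intros)
  thus ?thesis by (simp add: case_prod_beta)
qed

lemma evK_cont_s:
  assumes "contL Ls"
  shows "continuous_on (UNIV \<times> Lam) (\<lambda>(\<sigma>,z). evK Ls \<sigma> z x)"
proof -
  have "continuous_on (UNIV \<times> Lam) (\<lambda>q. (\<lambda>p. evK Ls (fst p) (fst (snd p)) (snd (snd p))) (fst q, snd q, x))"
    by (rule continuous_on_compose2[OF evK_cont[OF assms]]) (auto intro!: continuous_intros)
  thus ?thesis by (simp add: case_prod_beta)
qed

definition KD :: "nat \<Rightarrow> complex \<Rightarrow> complex \<Rightarrow> real \<Rightarrow> complex" where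
  "KD q \<sigma> z x = xderiv q (\<lambda>y. Kern \<sigma> z y) x"

lemma KD_rep: "\<exists>Ls. contL Ls \<and> (\<forall>\<sigma> z x. Im z > 0 \<longrightarrow> KD q \<sigma> z x = evK Ls \<sigma> z x)"
proof (induction q)
  case 0
  show ?case
    by (rule exI[of _ "[(\<lambda>_ _. 1, 0, 0)]"]) (auto simp: KD_def Kern_eq continuous_on_const)
next
  case (Suc q)
  then obtain Ls where Ls: "contL Ls" "\<And>\<sigma> z x. Im z > 0 \<Longrightarrow> KD q \<sigma> z x = evK Ls \<sigma> z x" by blast
  show ?case
  proof (intro exI conjI allI impI)
    show "contL (dK Ls)" by (rule contL_dK[OF Ls(1)])
    fix \<sigma> z x assume z: "Im z > 0"
    have "xderiv q (\<lambda>y. Kern \<sigma> z y) = (\<lambda>y. evK Ls \<sigma> z y)"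
      using Ls(2)[OF z] unfolding KD_def by auto
    hence "KD (Suc q) \<sigma> z x = vector_derivative (\<lambda>y. evK Ls \<sigma> z y) (at x)"
      by (simp add: KD_def xderiv_Suc)
    also have "\<dots> = evK (dK Ls) \<sigma> z x"
      by (rule vector_derivative_at[OF evK_has_vd[OF z]])
    finally show "KD (Suc q) \<sigma> z x = evK (dK Ls) \<sigma> z x" .
  qed
qed

lemma KD_has_vd:
  assumes "Im z > 0"
  shows "((\<lambda>y. KD q \<sigma> z y) has_vector_derivative KD (Suc q) \<sigma> z x) (at x)"
proof -
  have "xderiv q (\<lambda>y. Kern \<sigma> z y) = (\<lambda>y. KD q \<sigma> z y)" by (auto simp: KD_def)
  obtain Ls where Ls: "contL Ls" "\<And>\<sigma> z x. Im z > 0 \<Longrightarrow> KD q \<sigma> z x = evK Ls \<sigma> z x"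
    using KD_rep[of q] by blast
  have e: "(\<lambda>y. KD q \<sigma> z y) = (\<lambda>y. evK Ls \<sigma> z y)" using Ls(2)[OF assms] by auto
  have "KD (Suc q) \<sigma> z x = vector_derivative (\<lambda>y. KD q \<sigma> z y) (at x)"
    by (simp add: KD_def xderiv_Suc)
  also have "\<dots> = evK (dK Ls) \<sigma> z x" unfolding e
    by (rule vector_derivative_at[OF evK_has_vd[OF assms]])
  finally show ?thesis unfolding e using evK_has_vd[OF assms] by simp
qed

lemma KD_cont_x: "continuous_on (UNIV \<times> Lam) (\<lambda>(x,z). KD q \<sigma> z x)"
proof -
  obtain Ls where Ls: "contL Ls" "\<And>\<sigma> z x. Im z > 0 \<Longrightarrow> KD q \<sigma> z x = evK Ls \<sigma> z x"
    using KD_rep[of q] by blast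
  show ?thesis
    by (rule continuous_on_cong[THEN iffD1, OF refl _ evK_cont_x[OF Ls(1)]])
       (auto simp: Ls(2) Lam_def)
qed

lemma KD_cont_s: "continuous_on (UNIV \<times> Lam) (\<lambda>(\<sigma>,z). KD q \<sigma> z x)"
proof -
  obtain Ls where Ls: "contL Ls" "\<And>\<sigma> z x. Im z > 0 \<Longrightarrow> KD q \<sigma> z x = evK Ls \<sigma> z x"
    using KD_rep[of q] by blast
  show ?thesis
    by (rule continuous_on_cong[THEN iffD1, OF refl _ evK_cont_s[OF Ls(1)]])
       (auto simp: Ls(2) Lam_def)
qed


lemma test_supp:
  assumes "test_fun g"
  obtains C where "compact C" "C \<subseteq> Lam" "\<And>z. z \<notin> C \<Longrightarrow> g z = 0"
  using assms unfolding test_fun_def by blast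

lemma LOC1:
  fixes F :: "'a::t2_space \<Rightarrow> 'b::real_normed_vector"
  assumes "open S" "compact C" "C \<subseteq> S" "continuous_on S F" "\<And>z. z \<notin> C \<Longrightarrow> F z = 0"
  shows "continuous_on UNIV F"
proof -
  have "continuous_on (-C) F"
    by (rule continuous_on_eq[OF continuous_on_const[of _ 0]]) (use assms(5) in auto)
  moreover have "open (-C)" using assms(2) compact_imp_closed by blast
  ultimately have "continuous_on (S \<union> -C) F"
    using continuous_on_open_Un assms(1,4) by blast
  moreover have "S \<union> -C = UNIV" using assms(3) by blast
  ultimately show ?thesis by simp
qed

lemma LOC2:
  fixes \<Phi> :: "'a::topological_space \<Rightarrow> complex \<Rightarrow> complex"
  assumes "compact C" "C \<subseteq> Lam" "continuous_on (UNIV \<times> Lam) (\<lambda>(x,z). \<Phi> x z)"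
    "continuous_on UNIV h" "\<And>z. z \<notin> C \<Longrightarrow> h z = 0"
  shows "continuous_on UNIV (\<lambda>(x,z). \<Phi> x z * h z)"
proof -
  have h': "continuous_on (UNIV \<times> Lam) (\<lambda>p. h (snd p))"
    by (rule continuous_on_compose2[OF assms(4)]) (auto intro!: continuous_intros)
  have "continuous_on (UNIV \<times> Lam) (\<lambda>p. (\<lambda>(x,z). \<Phi> x z) p * h (snd p))"
    by (intro continuous_intros assms(3) h')
  hence 1: "continuous_on (UNIV \<times> Lam) (\<lambda>(x,z). \<Phi> x z * h z)"
    by (simp add: case_prod_beta)
  have 2: "continuous_on (UNIV \<times> (-C)) (\<lambda>(x,z). \<Phi> x z * h z)"
    by (rule continuous_on_eq[OF continuous_on_const[of _ 0]]) (use assms(5) in auto)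
  have o1: "open (UNIV \<times> Lam :: ('a \<times> complex) set)" by (intro open_Times open_Lam open_UNIV)
  have o2: "open (UNIV \<times> (-C) :: ('a \<times> complex) set)"
    using assms(1) compact_imp_closed by (intro open_Times open_UNIV) auto
  have "continuous_on ((UNIV \<times> Lam) \<union> (UNIV \<times> (-C))) (\<lambda>(x,z). \<Phi> x z * h z)"
    using continuous_on_open_Un[OF o1 o2 1 2] .
  moreover have "(UNIV \<times> Lam) \<union> (UNIV \<times> (-C)) = (UNIV :: ('a \<times> complex) set)"
    using assms(2) by auto
  ultimately show ?thesis by simp
qed

lemma test_cont:
  assumes "test_fun g" shows "continuous_on UNIV g"
proof -
  obtain C where C: "compact C" "C \<subseteq> Lam" "\<And>z. z \<notin> C \<Longrightarrow> g z = 0"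
    using test_supp[OF assms] by blast
  have "\<forall>z\<in>Lam. g differentiable (at z)"
    using assms unfolding test_fun_def smooth_on_def
    by (metis pdirs.simps(1))
  hence "continuous_on Lam g"
    by (intro continuous_at_imp_continuous_on) (auto intro: differentiable_imp_continuous_within)
  thus ?thesis by (rule LOC1[OF open_Lam C(1,2)]) (rule C(3))
qed

definition hw :: "(complex \<Rightarrow> complex) \<Rightarrow> complex \<Rightarrow> complex" where
  "hw g z = g z / of_real (4 * (Im z)^2)"

lemma hw_cont:
  assumes "test_fun g" shows "continuous_on UNIV (hw g)"
proof -
  obtain C where C: "compact C" "C \<subseteq> Lam" "\<And>z. z \<notin> C \<Longrightarrow> g z = 0"
    using test_supp[OF assms] by blast
  have "continuous_on Lam (hw g)"
    unfolding hw_def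
    by (intro continuous_intros continuous_on_subset[OF test_cont[OF assms]])
       (auto simp: Lam_def)
  thus ?thesis by (rule LOC1[OF open_Lam C(1,2)]) (simp add: hw_def C(3))
qed

lemma CONV:
  fixes G :: "complex \<Rightarrow> complex"
  assumes "C \<subseteq> Lam" "C \<subseteq> cbox a b" "continuous_on UNIV G" "\<And>z. z \<notin> C \<Longrightarrow> G z = 0"
  shows "(G has_integral integral (cbox a b) G) Lam"
proof -
  have "G integrable_on cbox a b"
    by (rule integrable_continuous[OF continuous_on_subset[OF assms(3)]]) auto
  hence "(G has_integral integral (cbox a b) G) (cbox a b)" by (simp add: integrable_integral)
  hence "(G has_integral integral (cbox a b) G) UNIV"
    by (rule has_integral_on_superset) (use assms(2,4) in auto)
  moreover have "(\<lambda>x. if x \<in> Lam then G x else 0) = G" by (rule ext) (use assms(1,4) in auto)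
  ultimately show ?thesis using has_integral_restrict_UNIV[of Lam G] by simp
qed

section \<open>Differentiation of J under the integral sign\<close>

lemma L1_main:
  assumes g: "test_fun g"
  shows "xderiv q (J g \<sigma>) x = integral Lam (\<lambda>z. KD q \<sigma> z x * g z / of_real (4 * (Im z)^2))"
    and "(\<lambda>z. KD q \<sigma> z x * g z / of_real (4 * (Im z)^2)) integrable_on Lam"
    and "(xderiv q (J g \<sigma>) has_vector_derivative xderiv (Suc q) (J g \<sigma>) x) (at x)"
    and "continuous_on UNIV (\<lambda>\<sigma>. xderiv q (J g \<sigma>) x)"
proof -
  obtain C where C: "compact C" "C \<subseteq> Lam" "\<And>z. z \<notin> C \<Longrightarrow> g z = 0"
    using test_supp[OF g] by blast
  obtain a where a: "C \<subseteq> cbox (-a) a"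
    using bounded_subset_cbox_symmetric[OF compact_imp_bounded[OF C(1)]] by blast
  have h: "continuous_on UNIV (hw g)" by (rule hw_cont[OF g])
  have h0: "\<And>z. z \<notin> C \<Longrightarrow> hw g z = 0" using C(3) by (simp add: hw_def)
  have eqI: "(\<lambda>z. KD q \<sigma> z x * g z / of_real (4 * (Im z)^2)) = (\<lambda>z. KD q \<sigma> z x * hw g z)" for q \<sigma> x
    by (auto simp: hw_def)
  have cx: "continuous_on UNIV (\<lambda>(x,z). KD q \<sigma> z x * hw g z)" for q \<sigma>
    by (rule LOC2[OF C(1,2) KD_cont_x h h0])
  have cs: "continuous_on UNIV (\<lambda>(\<sigma>,z). KD q \<sigma> z x * hw g z)" for q x
    by (rule LOC2[OF C(1,2) KD_cont_s h h0])
  have cz: "continuous_on UNIV (\<lambda>z. KD q \<sigma> z x * hw g z)" for q \<sigma> x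
  proof -
    have "continuous_on UNIV (\<lambda>z. (\<lambda>(x,z). KD q \<sigma> z x * hw g z) (x, z))"
      by (rule continuous_on_compose2[OF cx[of q \<sigma>]]) (auto intro!: continuous_intros)
    thus ?thesis by simp
  qed
  have z0: "KD q \<sigma> z x * hw g z = 0" if "z \<notin> C" for q \<sigma> x z using h0[OF that] by simp
  have HI: "((\<lambda>z. KD q \<sigma> z x * hw g z) has_integral integral (cbox (-a) a) (\<lambda>z. KD q \<sigma> z x * hw g z)) Lam"
    for q \<sigma> x
    by (rule CONV[OF C(2) a cz]) (rule z0)
  have main: "xderiv q (J g \<sigma>) = (\<lambda>x. integral (cbox (-a) a) (\<lambda>z. KD q \<sigma> z x * hw g z))" for q \<sigma>
  proof (induction q)
    case 0
    show ?case
    proof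
      fix x
      have "J g \<sigma> x = integral Lam (\<lambda>z. KD 0 \<sigma> z x * hw g z)"
        by (simp add: J_def KD_def hw_def)
      also have "\<dots> = integral (cbox (-a) a) (\<lambda>z. KD 0 \<sigma> z x * hw g z)"
        using HI[of 0 \<sigma> x] by (simp add: integral_unique)
      finally show "xderiv 0 (J g \<sigma>) x = integral (cbox (-a) a) (\<lambda>z. KD 0 \<sigma> z x * hw g z)" by simp
    qed
  next
    case (Suc q)
    show ?case
    proof
      fix x0
      have LR: "((\<lambda>x. integral (cbox (-a) a) (\<lambda>z. KD q \<sigma> z x * hw g z)) has_vector_derivative
          integral (cbox (-a) a) (\<lambda>z. KD (Suc q) \<sigma> z x0 * hw g z)) (at x0 within UNIV)"
      proof (rule leibniz_rule_vector_derivative[where f = "\<lambda>x z. KD q \<sigma> z x * hw g z"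
            and fx = "\<lambda>x z. KD (Suc q) \<sigma> z x * hw g z"])
        fix x :: real and t assume "x \<in> UNIV" "t \<in> cbox (-a) a"
        show "((\<lambda>x. KD q \<sigma> t x * hw g t) has_vector_derivative KD (Suc q) \<sigma> t x * hw g t) (at x within UNIV)"
        proof (cases "Im t > 0")
          case True
          thus ?thesis by (simp add: has_vector_derivative_mult_left KD_has_vd)
        next
          case False
          hence "t \<notin> C" using C(2) by (auto simp: Lam_def)
          thus ?thesis using h0 by simp
        qed
      next
        fix x :: real
        show "(\<lambda>z. KD q \<sigma> z x * hw g z) integrable_on cbox (-a) a"
          by (rule integrable_continuous[OF continuous_on_subset[OF cz]]) auto
      next
        show "continuous_on (UNIV \<times> cbox (-a) a) (\<lambda>(x, z). KD (Suc q) \<sigma> z x * hw g z)"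
          by (rule continuous_on_subset[OF cx]) auto
      qed auto
      have "xderiv (Suc q) (J g \<sigma>) x0 = vector_derivative (\<lambda>x. integral (cbox (-a) a) (\<lambda>z. KD q \<sigma> z x * hw g z)) (at x0)"
        by (simp add: xderiv_Suc Suc.IH)
      also have "\<dots> = integral (cbox (-a) a) (\<lambda>z. KD (Suc q) \<sigma> z x0 * hw g z)"
        by (rule vector_derivative_at) (use LR in simp)
      finally show "xderiv (Suc q) (J g \<sigma>) x0 = integral (cbox (-a) a) (\<lambda>z. KD (Suc q) \<sigma> z x0 * hw g z)" .
    qed
  qed
  show "xderiv q (J g \<sigma>) x = integral Lam (\<lambda>z. KD q \<sigma> z x * g z / of_real (4 * (Im z)^2))"
    unfolding eqI main using HI[of q \<sigma> x] by (simp add: integral_unique)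
  show "(\<lambda>z. KD q \<sigma> z x * g z / of_real (4 * (Im z)^2)) integrable_on Lam"
    unfolding eqI using HI[of q \<sigma> x] by blast
  show "(xderiv q (J g \<sigma>) has_vector_derivative xderiv (Suc q) (J g \<sigma>) x) (at x)"
  proof -
    have "((\<lambda>x. integral (cbox (-a) a) (\<lambda>z. KD q \<sigma> z x * hw g z)) has_vector_derivative
          integral (cbox (-a) a) (\<lambda>z. KD (Suc q) \<sigma> z x * hw g z)) (at x within UNIV)"
    proof (rule leibniz_rule_vector_derivative[where f = "\<lambda>x z. KD q \<sigma> z x * hw g z"
            and fx = "\<lambda>x z. KD (Suc q) \<sigma> z x * hw g z"])
      fix x :: real and t assume "x \<in> UNIV" "t \<in> cbox (-a) a"
      show "((\<lambda>x. KD q \<sigma> t x * hw g t) has_vector_derivative KD (Suc q) \<sigma> t x * hw g t) (at x within UNIV)"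
      proof (cases "Im t > 0")
        case True
        thus ?thesis by (simp add: has_vector_derivative_mult_left KD_has_vd)
      next
        case False
        hence "t \<notin> C" using C(2) by (auto simp: Lam_def)
        thus ?thesis using h0 by simp
      qed
    next
      fix x :: real
      show "(\<lambda>z. KD q \<sigma> z x * hw g z) integrable_on cbox (-a) a"
        by (rule integrable_continuous[OF continuous_on_subset[OF cz]]) auto
    next
      show "continuous_on (UNIV \<times> cbox (-a) a) (\<lambda>(x, z). KD (Suc q) \<sigma> z x * hw g z)"
        by (rule continuous_on_subset[OF cx]) auto
    qed auto
    thus ?thesis unfolding main by simp
  qed
  show "continuous_on UNIV (\<lambda>\<sigma>. xderiv q (J g \<sigma>) x)"
    unfolding main
    by (rule integral_continuous_on_param) (rule continuous_on_subset[OF cs], auto)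
qed

lemma J_smooth1: "test_fun g \<Longrightarrow> smooth1 (J g \<sigma>)"
  unfolding smooth1_def using L1_main(3) by blast

lemma JR_comp':
  assumes "JR F" "JR (\<lambda>g. J (T g))" "\<And>g. test_fun g \<Longrightarrow> test_fun (T g)"
  shows "JR (\<lambda>g. F (T g))"
  using JR_comp[OF assms J_smooth1] by blast


lemma fd_local:
  assumes "open U" "z \<in> U" "\<And>y. y \<in> U \<Longrightarrow> f y = g y"
  shows "frechet_derivative f (at z) = frechet_derivative g (at z)"
proof -
  have "(f has_derivative D) (at z) \<longleftrightarrow> (g has_derivative D) (at z)" for D
    using has_derivative_transform_within_open[of f D z UNIV U g]
          has_derivative_transform_within_open[of g D z UNIV U f] assms by auto
  thus ?thesis unfolding frechet_derivative_def by simp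
qed

lemma diff_local:
  assumes "open U" "z \<in> U" "\<And>y. y \<in> U \<Longrightarrow> f y = g y" "f differentiable (at z)"
  shows "g differentiable (at z)"
  using assms has_derivative_transform_within_open[of f _ z UNIV U g] unfolding differentiable_def
  by blast

lemma pdirs_local:
  assumes "open U" "\<And>y. y \<in> U \<Longrightarrow> f y = g y" "z \<in> U"
  shows "pdirs vs f z = pdirs vs g z"
  using assms(3)
proof (induction vs arbitrary: z)
  case Nil thus ?case using assms(2) by simp
next
  case (Cons v vs)
  have "frechet_derivative (pdirs vs f) (at z) = frechet_derivative (pdirs vs g) (at z)"
    by (rule fd_local[OF assms(1) Cons.prems]) (rule Cons.IH)
  thus ?case by simp
qed

lemma smooth_on_cong:
  assumes "open U" "\<And>y. y \<in> U \<Longrightarrow> f y = g y" "smooth_on U f"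
  shows "smooth_on U g"
  unfolding smooth_on_def
proof (intro allI ballI)
  fix vs z assume z: "z \<in> U"
  have "pdirs vs f differentiable (at z)" using assms(3) z unfolding smooth_on_def by blast
  thus "pdirs vs g differentiable (at z)"
    by (rule diff_local[OF assms(1) z, rotated]) (rule pdirs_local[OF assms(1,2)])
qed

lemma smooth_on_subset: "smooth_on U f \<Longrightarrow> V \<subseteq> U \<Longrightarrow> smooth_on V f"
  unfolding smooth_on_def by blast

lemma fd_apply:
  assumes "(f has_derivative D) (at z)" shows "frechet_derivative f (at z) v = D v"
  using frechet_derivative_at[OF assms] by simp

lemma smooth_add:
  assumes U: "open U" and f: "smooth_on U f" and g: "smooth_on U g"
  shows "smooth_on U (\<lambda>z. f z + g z)"
proof -
  have rep: "pdirs vs (\<lambda>z. f z + g z) z = pdirs vs f z + pdirs vs g z" if "z \<in> U" for vs z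
    using that
  proof (induction vs arbitrary: z)
    case Nil thus ?case by simp
  next
    case (Cons v vs)
    have "frechet_derivative (pdirs vs (\<lambda>z. f z + g z)) (at z) = frechet_derivative (\<lambda>y. pdirs vs f y + pdirs vs g y) (at z)"
      by (rule fd_local[OF U Cons.prems]) (rule Cons.IH)
    moreover have "((\<lambda>y. pdirs vs f y + pdirs vs g y) has_derivative
        (\<lambda>h. frechet_derivative (pdirs vs f) (at z) h + frechet_derivative (pdirs vs g) (at z) h)) (at z)"
      using f g Cons.prems unfolding smooth_on_def frechet_derivative_works
      by (intro has_derivative_add) auto
    ultimately show ?case by (simp add: fd_apply)
  qed
  show ?thesis unfolding smooth_on_def
  proof (intro allI ballI)
    fix vs z assume z: "z \<in> U"
    have "(\<lambda>y. pdirs vs f y + pdirs vs g y) differentiable (at z)"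
      using f g z unfolding smooth_on_def by (intro differentiable_add) auto
    thus "pdirs vs (\<lambda>z. f z + g z) differentiable (at z)"
      by (rule diff_local[OF U z, rotated]) (simp add: rep)
  qed
qed

definition prodrep :: "(complex \<Rightarrow> complex) \<Rightarrow> (complex \<Rightarrow> complex) \<Rightarrow> (complex \<times> complex list \<times> complex list) list \<Rightarrow> complex \<Rightarrow> complex" where
  "prodrep f g P z = (\<Sum>(c,as,bs)\<leftarrow>P. c * pdirs as f z * pdirs bs g z)"

definition dP :: "complex \<Rightarrow> (complex \<times> complex list \<times> complex list) list \<Rightarrow> (complex \<times> complex list \<times> complex list) list" where
  "dP v P = concat (map (\<lambda>(c,as,bs). [(c, v#as, bs), (c, as, v#bs)]) P)"

lemma prodrep_Nil[simp]: "prodrep f g [] z = 0" by (simp add: prodrep_def)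
lemma prodrep_Cons[simp]: "prodrep f g ((c,as,bs) # P) z = c * pdirs as f z * pdirs bs g z + prodrep f g P z"
  by (simp add: prodrep_def)
lemma dP_Nil[simp]: "dP v [] = []" by (simp add: dP_def)
lemma dP_Cons[simp]: "dP v ((c,as,bs) # P) = (c, v#as, bs) # (c, as, v#bs) # dP v P" by (simp add: dP_def)

lemma prodrep_has_derivative:
  assumes f: "smooth_on U f" and g: "smooth_on U g" and z: "z \<in> U"
  shows "((\<lambda>y. prodrep f g P y) has_derivative (\<lambda>v. prodrep f g (dP v P) z)) (at z)"
proof (induction P)
  case Nil thus ?case by simp
next
  case (Cons e P)
  obtain c as bs where e: "e = (c,as,bs)" by (cases e)
  have df: "(pdirs as f has_derivative (\<lambda>v. pdirs (v#as) f z)) (at z)"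
    using f z unfolding smooth_on_def frechet_derivative_works by simp
  have dg: "(pdirs bs g has_derivative (\<lambda>v. pdirs (v#bs) g z)) (at z)"
    using g z unfolding smooth_on_def frechet_derivative_works by simp
  have "((\<lambda>y. c * (pdirs as f y * pdirs bs g y) + prodrep f g P y) has_derivative
     (\<lambda>v. c * (pdirs as f z * pdirs (v#bs) g z + pdirs (v#as) f z * pdirs bs g z) + prodrep f g (dP v P) z)) (at z)"
    by (intro has_derivative_add has_derivative_mult_right has_derivative_mult df dg Cons.IH)
  thus ?case by (simp add: e algebra_simps)
qed

lemma smooth_mult:
  assumes U: "open U" and f: "smooth_on U f" and g: "smooth_on U g"
  shows "smooth_on U (\<lambda>z. f z * g z)"
proof -
  have rep: "\<exists>P. \<forall>z\<in>U. pdirs vs (\<lambda>z. f z * g z) z = prodrep f g P z" for vs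
  proof (induction vs)
    case Nil
    show ?case by (rule exI[of _ "[(1,[],[])]"]) simp
  next
    case (Cons v vs)
    then obtain P where P: "\<forall>z\<in>U. pdirs vs (\<lambda>z. f z * g z) z = prodrep f g P z" by blast
    show ?case
    proof (intro exI ballI)
      fix z assume z: "z \<in> U"
      have "frechet_derivative (pdirs vs (\<lambda>z. f z * g z)) (at z) = frechet_derivative (prodrep f g P) (at z)"
        by (rule fd_local[OF U z]) (use P in auto)
      thus "pdirs (v # vs) (\<lambda>z. f z * g z) z = prodrep f g (dP v P) z"
        using fd_apply[OF prodrep_has_derivative[OF f g z, of P]] by simp
    qed
  qed
  show ?thesis unfolding smooth_on_def
  proof (intro allI ballI)
    fix vs z assume z: "z \<in> U"
    obtain P where P: "\<forall>z\<in>U. pdirs vs (\<lambda>z. f z * g z) z = prodrep f g P z" using rep by blast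
    have "prodrep f g P differentiable (at z)"
      using prodrep_has_derivative[OF f g z] unfolding differentiable_def by blast
    thus "pdirs vs (\<lambda>z. f z * g z) differentiable (at z)"
      by (rule diff_local[OF U z, rotated]) (use P in auto)
  qed
qed

lemma pdirs_append1: "pdirs vs (pdirs [v] f) = pdirs (vs @ [v]) f"
  by (induction vs) auto

lemma smooth_pdir1: "smooth_on U f \<Longrightarrow> smooth_on U (pdirs [v] f)"
  unfolding smooth_on_def pdirs_append1 by blast

lemma smooth_linear:
  assumes "\<And>z. (f has_derivative L) (at z)"
  shows "smooth_on U f"
proof -
  have c: "vs \<noteq> [] \<Longrightarrow> \<exists>c. pdirs vs f = (\<lambda>z. c)" for vs
  proof (induction vs)
    case Nil thus ?case by simp
  next
    case (Cons v vs)
    show ?case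
    proof (cases "vs = []")
      case True
      have "pdirs [v] f = (\<lambda>z. L v)" using fd_apply[OF assms] by (auto simp: fun_eq_iff)
      thus ?thesis using True by auto
    next
      case False
      then obtain c where ce: "pdirs vs f = (\<lambda>z. c)" using Cons.IH by blast
      have "pdirs (v # vs) f = (\<lambda>z. frechet_derivative (\<lambda>z. c) (at z) v)"
        by (simp only: pdirs.simps ce)
      hence "pdirs (v # vs) f = (\<lambda>z. 0)" using fd_apply[OF has_derivative_const[of c]] by (auto simp: fun_eq_iff)
      thus ?thesis by blast
    qed
  qed
  show ?thesis unfolding smooth_on_def
  proof (intro allI ballI)
    fix vs z
    show "pdirs vs f differentiable (at z)"
    proof (cases "vs = []")
      case True thus ?thesis using assms unfolding differentiable_def by auto
    next
      case False then obtain c where "pdirs vs f = (\<lambda>z. c)" using c by blast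
      thus ?thesis by simp
    qed
  qed
qed

lemma smooth_const: "smooth_on U (\<lambda>z. c)"
  by (rule smooth_linear[of _ "\<lambda>h. 0"]) simp
lemma smooth_id: "smooth_on U (\<lambda>z. z)"
  by (rule smooth_linear[of _ "\<lambda>h. h"]) simp
lemma smooth_cnj: "smooth_on U (\<lambda>z. cnj z)"
  by (rule smooth_linear[of _ "\<lambda>h. cnj h"]) simp

lemma invIm_has_derivative:
  fixes c :: complex
  assumes "Im z > 0"
  shows "((\<lambda>y. c / of_real (Im y) ^ m) has_derivative
           (\<lambda>h. - (c * of_nat m * of_real (Im h)) / of_real (Im z) ^ Suc m)) (at z)"
proof -
  have nz: "(of_real (Im z) :: complex) \<noteq> 0" using assms by simp
  have "((\<lambda>y. c / of_real (Im y) ^ m) has_derivative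
      (\<lambda>h. (0 * of_real (Im z) ^ m - c * (of_nat m * of_real (Im h) * of_real (Im z) ^ (m - 1)))
          / (of_real (Im z) ^ m * of_real (Im z) ^ m))) (at z)"
    by (intro has_derivative_divide' has_derivative_const has_derivative_power
        has_derivative_of_real has_derivative_Im has_derivative_ident) (use assms in simp)
  moreover have "(\<lambda>h. (0 * of_real (Im z) ^ m - c * (of_nat m * of_real (Im h) * of_real (Im z) ^ (m - 1)))
          / (of_real (Im z) ^ m * of_real (Im z) ^ m)) =
      (\<lambda>h. - (c * of_nat m * of_real (Im h)) / of_real (Im z) ^ Suc m)"
  proof (cases m)
    case 0 thus ?thesis by simp
  next
    case (Suc k) thus ?thesis using nz by (auto simp: fun_eq_iff field_simps)
  qed
  ultimately show ?thesis by simp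
qed

lemma smooth_invIm: "smooth_on Lam (\<lambda>z. (c::complex) / of_real (Im z) ^ m)"
proof -
  have rep: "\<exists>c m. \<forall>z\<in>Lam. pdirs vs (\<lambda>z. c0 / of_real (Im z) ^ m0) z = c / of_real (Im z) ^ m" for vs c0 m0
  proof (induction vs)
    case Nil thus ?case by auto
  next
    case (Cons v vs)
    then obtain c m where P: "\<forall>z\<in>Lam. pdirs vs (\<lambda>z. c0 / of_real (Im z) ^ m0) z = c / of_real (Im z) ^ m" by blast
    show ?case
    proof (intro exI ballI)
      fix z assume z: "z \<in> Lam"
      have "frechet_derivative (pdirs vs (\<lambda>z. c0 / of_real (Im z) ^ m0)) (at z) =
            frechet_derivative (\<lambda>y. c / of_real (Im y) ^ m) (at z)"
        by (rule fd_local[OF open_Lam z]) (use P in auto)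
      thus "pdirs (v # vs) (\<lambda>z. c0 / of_real (Im z) ^ m0) z = (- (c * of_nat m * of_real (Im v))) / of_real (Im z) ^ Suc m"
        using fd_apply[OF invIm_has_derivative, of z c m v] z by (simp add: Lam_def)
    qed
  qed
  show ?thesis unfolding smooth_on_def
  proof (intro allI ballI)
    fix vs z assume z: "z \<in> Lam"
    obtain c' m' where P: "\<forall>z\<in>Lam. pdirs vs (\<lambda>z. c / of_real (Im z) ^ m) z = c' / of_real (Im z) ^ m'"
      using rep by blast
    have "(\<lambda>y. c' / of_real (Im y) ^ m') differentiable (at z)"
      using invIm_has_derivative[of z c' m'] z unfolding differentiable_def by (auto simp: Lam_def)
    thus "pdirs vs (\<lambda>z. c / of_real (Im z) ^ m) differentiable (at z)"
      by (rule diff_local[OF open_Lam z, rotated]) (use P in auto)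
  qed
qed

lemma test_mult:
  assumes "smooth_on Lam V" "test_fun g" shows "test_fun (\<lambda>z. V z * g z)"
proof -
  obtain C where C: "compact C" "C \<subseteq> Lam" "\<And>z. z \<notin> C \<Longrightarrow> g z = 0"
    using test_supp[OF assms(2)] by blast
  have "smooth_on Lam g" using assms(2) unfolding test_fun_def by blast
  thus ?thesis unfolding test_fun_def using C smooth_mult[OF open_Lam assms(1)] by auto
qed

lemma test_add:
  assumes "test_fun f" "test_fun g" shows "test_fun (\<lambda>z. f z + g z)"
proof -
  obtain C where C: "compact C" "C \<subseteq> Lam" "\<And>z. z \<notin> C \<Longrightarrow> f z = 0"
    using test_supp[OF assms(1)] by blast
  obtain D where D: "compact D" "D \<subseteq> Lam" "\<And>z. z \<notin> D \<Longrightarrow> g z = 0"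
    using test_supp[OF assms(2)] by blast
  have "smooth_on Lam f" "smooth_on Lam g" using assms unfolding test_fun_def by blast+
  hence "smooth_on Lam (\<lambda>z. f z + g z)" using smooth_add[OF open_Lam] by blast
  moreover have "compact (C \<union> D)" "C \<union> D \<subseteq> Lam" using C D by auto
  moreover have "\<forall>z. z \<notin> C \<union> D \<longrightarrow> f z + g z = 0" using C D by auto
  ultimately show ?thesis unfolding test_fun_def by blast
qed

lemma test_zero: "test_fun (\<lambda>z. 0)"
  unfolding test_fun_def using smooth_const[of Lam 0] by (auto intro!: exI[of _ "{}"])

lemma test_sum: "finite I \<Longrightarrow> (\<And>i. i \<in> I \<Longrightarrow> test_fun (f i)) \<Longrightarrow> test_fun (\<lambda>z. \<Sum>i\<in>I. f i z)"
  by (induction I rule: finite_induct) (auto intro: test_add test_zero)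

lemma test_cmult: "test_fun g \<Longrightarrow> test_fun (\<lambda>z. c * g z)"
  using test_mult[OF smooth_const] .

lemma fd_zero_outside:
  fixes g :: "complex \<Rightarrow> complex"
  assumes "compact C" "\<And>z. z \<notin> C \<Longrightarrow> g z = 0" "z \<notin> C"
  shows "frechet_derivative g (at z) = (\<lambda>h. 0)"
proof -
  have "open (-C)" using assms(1) compact_imp_closed by blast
  hence "frechet_derivative g (at z) = frechet_derivative (\<lambda>y. 0::complex) (at z)"
    by (rule fd_local) (use assms in auto)
  thus ?thesis using frechet_derivative_at[OF has_derivative_const[of "0::complex"]] by simp
qed

lemma Dz_alt: "Dz g = (\<lambda>z. (1/2) * pdirs [1] g z + (-\<i>/2) * pdirs [\<i>] g z)"
  by (auto simp: Dz_def fun_eq_iff field_simps)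
lemma Dzb_alt: "Dzb g = (\<lambda>z. (1/2) * pdirs [1] g z + (\<i>/2) * pdirs [\<i>] g z)"
  by (auto simp: Dzb_def fun_eq_iff field_simps)

lemma test_Dz: assumes "test_fun g" shows "test_fun (Dz g)"
proof -
  obtain C where C: "compact C" "C \<subseteq> Lam" "\<And>z. z \<notin> C \<Longrightarrow> g z = 0"
    using test_supp[OF assms] by blast
  have sg: "smooth_on Lam g" using assms unfolding test_fun_def by blast
  have "smooth_on Lam (Dz g)" unfolding Dz_alt
    by (intro smooth_add[OF open_Lam] smooth_mult[OF open_Lam] smooth_const smooth_pdir1 sg)
  moreover have "\<forall>z. z \<notin> C \<longrightarrow> Dz g z = 0" using fd_zero_outside[OF C(1) C(3)] by (simp add: Dz_def)
  ultimately show ?thesis unfolding test_fun_def using C by blast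
qed

lemma test_Dzb: assumes "test_fun g" shows "test_fun (Dzb g)"
proof -
  obtain C where C: "compact C" "C \<subseteq> Lam" "\<And>z. z \<notin> C \<Longrightarrow> g z = 0"
    using test_supp[OF assms] by blast
  have sg: "smooth_on Lam g" using assms unfolding test_fun_def by blast
  have "smooth_on Lam (Dzb g)" unfolding Dzb_alt
    by (intro smooth_add[OF open_Lam] smooth_mult[OF open_Lam] smooth_const smooth_pdir1 sg)
  moreover have "\<forall>z. z \<notin> C \<longrightarrow> Dzb g z = 0" using fd_zero_outside[OF C(1) C(3)] by (simp add: Dzb_def)
  ultimately show ?thesis unfolding test_fun_def using C by blast
qed

lemma smooth_zpow0: "smooth_on UNIV (\<lambda>z::complex. z ^ n)"
  by (induction n) (auto intro: smooth_mult[OF open_UNIV] smooth_const smooth_id)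
lemma smooth_zpow: "smooth_on U (\<lambda>z::complex. z ^ n)"
  using smooth_on_subset[OF smooth_zpow0] by blast
lemma smooth_cnjpow0: "smooth_on UNIV (\<lambda>z::complex. cnj z ^ n)"
  by (induction n) (auto intro: smooth_mult[OF open_UNIV] smooth_const smooth_cnj)
lemma smooth_cnjpow: "smooth_on U (\<lambda>z::complex. cnj z ^ n)"
  using smooth_on_subset[OF smooth_cnjpow0] by blast


lemma KD_Suc: "KD (Suc q) \<sigma> z x = vector_derivative (\<lambda>y. KD q \<sigma> z y) (at x)"
  by (simp add: KD_def xderiv_Suc eta_contract_eq)

lemma KD0: "Im z > 0 \<Longrightarrow> KD 0 \<sigma> z x = kk \<sigma> z x"
  by (simp add: KD_def Kern_eq)

lemma KD1: assumes "Im z > 0" shows "KD 1 \<sigma> z x = \<sigma> * of_real (wx z x) * kk (\<sigma> - 1) z x"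
proof -
  have "(\<lambda>y. KD 0 \<sigma> z y) = (\<lambda>y. kk \<sigma> z y)" using KD0[OF assms] by auto
  thus ?thesis using KD_Suc[of 0 \<sigma> z x] vector_derivative_at[OF kk_has_vd[OF assms]] by simp
qed

lemma KD2: assumes "Im z > 0"
  shows "KD 2 \<sigma> z x = \<sigma> * (\<sigma> - 1) * of_real (wx z x)^2 * kk (\<sigma> - 2) z x
     + \<sigma> * of_real (2 / Im z) * kk (\<sigma> - 1) z x"
proof -
  have e: "(\<lambda>y. KD 1 \<sigma> z y) = (\<lambda>y. \<sigma> * (of_real (wx z y) * kk (\<sigma> - 1) z y))"
    using KD1[OF assms] by auto
  have dw: "((\<lambda>y. of_real (wx z y) :: complex) has_vector_derivative of_real (2 / Im z)) (at x)"
    unfolding wx_def using assms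
    by (intro has_vector_derivative_of_real) (auto intro!: derivative_eq_intros simp: field_simps)
  have D: "((\<lambda>y. \<sigma> * (of_real (wx z y) * kk (\<sigma> - 1) z y)) has_vector_derivative
     \<sigma> * (of_real (wx z x) * ((\<sigma> - 1) * of_real (wx z x) * kk (\<sigma> - 1 - 1) z x) +
       of_real (2 / Im z) * kk (\<sigma> - 1) z x)) (at x)"
    by (intro has_vector_derivative_mult_right has_vector_derivative_mult dw kk_has_vd assms)
  have "KD 2 \<sigma> z x = \<sigma> * (of_real (wx z x) * ((\<sigma> - 1) * of_real (wx z x) * kk (\<sigma> - 1 - 1) z x) +
       of_real (2 / Im z) * kk (\<sigma> - 1) z x)"
    using KD_Suc[of 1 \<sigma> z x] vector_derivative_at[OF D] unfolding e by (simp add: numeral_2_eq_2)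
  moreover have "\<sigma> - 1 - 1 = \<sigma> - 2" by simp
  ultimately show ?thesis by (simp add: algebra_simps power2_eq_square)
qed

section \<open>Multiplication identities for the kernel\<close>

definition c1 :: "complex \<Rightarrow> complex" where "c1 t = (1/2) * (1 / (t + 1)) * (1 / (2 * t + 1))"
definition c2 :: "complex \<Rightarrow> complex" where "c2 t = 2 * t * (1 / (2 * t + 1))"

lemma nice_inv1': "nice (\<lambda>t. 1 / (t + 1))" using nice_inv1[of 1] by simp
lemma nice_inv2': "nice (\<lambda>t. 1 / (2 * t + 1))" using nice_inv2[of 1] by simp
lemma nice_c1: "nice c1"
  unfolding c1_def by (intro nice_mult nice_const nice_inv1' nice_inv2')
lemma nice_c2: "nice c2"
  unfolding c2_def by (intro nice_mult nice_const nice_inv2' nice_id)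

lemma half_ints_m1: assumes "t \<notin> half_ints" shows "t + 1 \<noteq> 0"
proof
  assume "t + 1 = 0"
  hence "t = of_int (-2) / 2" by (simp add: eq_neg_iff_add_eq_0 add.commute)
  thus False using assms unfolding half_ints_iff by blast
qed

lemma half_ints_m2: assumes "t \<notin> half_ints" shows "2 * t + 1 \<noteq> 0"
proof
  assume "2 * t + 1 = 0"
  hence "t = of_int (-1) / 2" by (simp add: field_simps eq_neg_iff_add_eq_0 add.commute)
  thus False using assms unfolding half_ints_iff by blast
qed

lemma Im_nz: "Im z > 0 \<Longrightarrow> (of_real (Im z) :: complex) \<noteq> 0" by simp

lemma M1_alg:
  fixes t K X B u :: complex
  assumes "u \<noteq> 0" "B \<noteq> 0" "u = 2 * t + 1"
  shows "((X^2 + B^2)/B)*K/B = (t*(2*X/B)^2*K + 2/B*((X^2 + B^2)/B)*K)/(2*u) + 2*t/u*K"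
proof -
  have nz: "2*u*B^2 \<noteq> 0" using assms(1,2) by simp
  have "((X^2 + B^2)/B)*K/B * (2*u*B^2) = ((t*(2*X/B)^2*K + 2/B*((X^2 + B^2)/B)*K)/(2*u) + 2*t/u*K) * (2*u*B^2)"
    using assms(1,2) apply (simp add: field_simps power2_eq_square)
    by (simp add: assms(3) algebra_simps)
  thus ?thesis using mult_right_cancel[OF nz] by blast
qed

lemma cancel2: "(a::complex) \<noteq> 0 \<Longrightarrow> (1/2) * (1/a) * v * (a * w) = v * w / 2"
  by (simp add: field_simps)

lemma M1:
  assumes z: "Im z > 0" and t: "\<tau> \<notin> half_ints"
  shows "kk \<tau> z x / of_real (Im z) = c1 \<tau> * KD 2 (\<tau> + 1) z x + c2 \<tau> * kk (\<tau> - 1) z x"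
proof -
  have n1: "\<tau> + 1 \<noteq> 0" using half_ints_m1[OF t] .
  have n2: "2 * \<tau> + 1 \<noteq> 0" using half_ints_m2[OF t] .
  have b: "(of_real (Im z) :: complex) \<noteq> 0" using z by simp
  define K where "K = kk (\<tau> - 1) z x"
  define X where "X = (of_real x - of_real (Re z) :: complex)"
  define B where "B = (of_real (Im z) :: complex)"
  define u where "u = 2 * \<tau> + 1"
  have W: "(of_real (wv z x) :: complex) = (X^2 + B^2)/B" by (simp add: wv_def X_def B_def)
  have WX: "(of_real (wx z x) :: complex) = 2*X/B" by (simp add: wx_def X_def B_def)
  have k: "kk \<tau> z x = ((X^2 + B^2)/B) * K" unfolding K_def W[symmetric] by (rule kk_minus1[OF z])
  have a1: "\<tau> + 1 - 1 = \<tau>" by simp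
  have a2: "\<tau> + 1 - 2 = \<tau> - 1" by simp
  have R: "(of_real (2 / Im z) :: complex) = 2 / B" by (simp add: B_def)
  have abs: "s*t*P*K + s*R*(W*K) = s*(t*P*K + R*W*K)" for s t P K R W :: complex
    by (simp add: algebra_simps)
  have d2: "KD 2 (\<tau> + 1) z x = (\<tau> + 1) * (\<tau> * (2*X/B)^2 * K + 2/B * ((X^2 + B^2)/B) * K)"
    using KD2[OF z, of "\<tau> + 1" x] unfolding a1 a2 k WX R K_def[symmetric]
    using abs[of "\<tau> + 1" \<tau> "(2*X/B)^2" K "2/B" "(X^2 + B^2)/B"] by simp
  have "c1 \<tau> * KD 2 (\<tau> + 1) z x = (\<tau> * (2*X/B)^2 * K + 2/B * ((X^2 + B^2)/B) * K) / (2*u)"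
    unfolding d2 c1_def u_def using cancel2[OF n1, of "1 / (2 * \<tau> + 1)"] by simp
  moreover have "c2 \<tau> = 2*\<tau>/u" by (simp add: c2_def u_def)
  ultimately show ?thesis unfolding k B_def[symmetric] K_def[symmetric]
    using M1_alg[of u B \<tau> X K] n2 b by (simp add: u_def B_def)
qed

lemma M2:
  assumes z: "Im z > 0" and t: "\<tau> \<notin> half_ints"
  shows "of_real (Re z) / of_real (Im z) * kk \<tau> z x = of_real x * (kk \<tau> z x / of_real (Im z)) - (1 / (2 * (\<tau> + 1))) * KD 1 (\<tau> + 1) z x"
proof -
  have n1: "\<tau> + 1 \<noteq> 0" using half_ints_m1[OF t] .
  have b: "(of_real (Im z) :: complex) \<noteq> 0" using z by simp
  have d1: "KD 1 (\<tau> + 1) z x = (\<tau> + 1) * of_real (wx z x) * kk \<tau> z x"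
    using KD1[OF z, of "\<tau> + 1" x] by simp
  have s: "(1 / (2 * (\<tau> + 1))) * ((\<tau> + 1) * of_real (wx z x) * kk \<tau> z x) = of_real (wx z x) * kk \<tau> z x / 2"
    using cancel2[OF n1, of 1 "of_real (wx z x) * kk \<tau> z x"] by (simp add: mult.assoc)
  show ?thesis unfolding d1 s unfolding wx_def using b by (simp add: field_simps)
qed

lemma M3:
  assumes z: "Im z > 0" and t: "\<tau> \<notin> half_ints"
  shows "of_real ((Re z)^2 + (Im z)^2) / of_real (Im z) * kk \<tau> z x =
     kk (\<tau> + 1) z x + of_real x ^ 2 * (kk \<tau> z x / of_real (Im z)) - of_real x * (1 / (\<tau> + 1)) * KD 1 (\<tau> + 1) z x"
proof -
  have n1: "\<tau> + 1 \<noteq> 0" using half_ints_m1[OF t] .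
  have b: "(of_real (Im z) :: complex) \<noteq> 0" using z by simp
  have d1: "KD 1 (\<tau> + 1) z x = (\<tau> + 1) * of_real (wx z x) * kk \<tau> z x"
    using KD1[OF z, of "\<tau> + 1" x] by simp
  have k: "kk (\<tau> + 1) z x = of_real (wv z x) * kk \<tau> z x" by (rule kk_Suc[OF z])
  have s: "of_real x * (1 / (\<tau> + 1)) * ((\<tau> + 1) * of_real (wx z x) * kk \<tau> z x) = of_real x * of_real (wx z x) * kk \<tau> z x"
    using n1 by (simp add: field_simps)
  show ?thesis unfolding d1 k s unfolding wx_def wv_def using b by (simp add: field_simps power2_eq_square)
qed

definition sumKD :: "entry list \<Rightarrow> complex \<Rightarrow> complex \<Rightarrow> real \<Rightarrow> complex" where
  "sumKD L \<tau> z x = (\<Sum>(u,p,q,r)\<leftarrow>L. u \<tau> * of_real x ^ p * KD q (\<tau> + of_int r) z x)"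

lemma sumKD_Nil[simp]: "sumKD [] \<tau> z x = 0" by (simp add: sumKD_def)
lemma sumKD_Cons[simp]: "sumKD ((u,p,q,r) # L) \<tau> z x = u \<tau> * of_real x ^ p * KD q (\<tau> + of_int r) z x + sumKD L \<tau> z x"
  by (simp add: sumKD_def)

lemma sumKD_has_integral:
  assumes g: "test_fun g"
  shows "((\<lambda>z. sumKD L \<tau> z x * g z / of_real (4 * (Im z)^2)) has_integral evalL L (J g) \<tau> x) Lam"
proof (induction L)
  case Nil thus ?case by simp
next
  case (Cons e L)
  obtain u p q r where e: "e = (u,p,q,r)" by (cases e)
  have I: "((\<lambda>z. KD q (\<tau> + of_int r) z x * g z / of_real (4 * (Im z)^2)) has_integral
      xderiv q (J g (\<tau> + of_int r)) x) Lam"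
    using L1_main(1,2)[OF g, of q "\<tau> + of_int r" x] by (simp add: integrable_integral)
  have "((\<lambda>z. (u \<tau> * of_real x ^ p) * (KD q (\<tau> + of_int r) z x * g z / of_real (4 * (Im z)^2))) has_integral
      (u \<tau> * of_real x ^ p) * xderiv q (J g (\<tau> + of_int r)) x) Lam"
    by (rule has_integral_mult_right[OF I])
  from has_integral_add[OF this Cons.IH] show ?case
    by (simp add: e eta_contract_eq algebra_simps add_divide_distrib)
qed

lemma JR_from_kernel:
  assumes nL: "niceL L"
    and id: "\<And>\<tau> z x. \<tau> \<notin> half_ints \<Longrightarrow> Im z > 0 \<Longrightarrow> Kern \<tau> z x * V z = sumKD L \<tau> z x"
  shows "JR (\<lambda>g. J (\<lambda>z. V z * g z))"
  unfolding JR_def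
proof (intro exI conjI allI impI)
  show "niceL L" by (rule nL)
  fix g \<tau> x assume g: "test_fun g" and t: "\<tau> \<notin> half_ints"
  obtain C where C: "compact C" "C \<subseteq> Lam" "\<And>z. z \<notin> C \<Longrightarrow> g z = 0"
    using test_supp[OF g] by metis
  have eq: "(\<lambda>z. Kern \<tau> z x * (V z * g z) / of_real (4 * (Im z)^2)) =
            (\<lambda>z. sumKD L \<tau> z x * g z / of_real (4 * (Im z)^2))"
  proof
    fix z show "Kern \<tau> z x * (V z * g z) / of_real (4 * (Im z)^2) = sumKD L \<tau> z x * g z / of_real (4 * (Im z)^2)"
    proof (cases "Im z > 0")
      case True thus ?thesis using id[OF t True, of x] by (simp add: mult.assoc)
    next
      case False hence "z \<notin> C" using C(2) by (auto simp: Lam_def)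
      thus ?thesis using C(3) by simp
    qed
  qed
  have "J (\<lambda>z. V z * g z) \<tau> x = integral Lam (\<lambda>z. sumKD L \<tau> z x * g z / of_real (4 * (Im z)^2))"
    unfolding J_def eq ..
  also have "\<dots> = evalL L (J g) \<tau> x"
    using sumKD_has_integral[OF g] by (rule integral_unique)
  finally show "J (\<lambda>z. V z * g z) \<tau> x = evalL L (J g) \<tau> x" .
qed

definition MJ :: "(complex \<Rightarrow> complex) \<Rightarrow> bool" where
  "MJ V \<longleftrightarrow> (\<forall>g. test_fun g \<longrightarrow> test_fun (\<lambda>z. V z * g z)) \<and> JR (\<lambda>g. J (\<lambda>z. V z * g z))"

lemma MJ_intro: "smooth_on Lam V \<Longrightarrow> JR (\<lambda>g. J (\<lambda>z. V z * g z)) \<Longrightarrow> MJ V"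
  unfolding MJ_def using test_mult by blast

lemma J_add:
  assumes "test_fun f" "test_fun h"
  shows "J (\<lambda>z. f z + h z) \<tau> x = J f \<tau> x + J h \<tau> x"
proof -
  have i1: "(\<lambda>z. Kern \<tau> z x * f z / of_real (4 * (Im z)^2)) integrable_on Lam"
    using L1_main(2)[OF assms(1), of 0 \<tau> x] by (simp add: KD_def)
  have i2: "(\<lambda>z. Kern \<tau> z x * h z / of_real (4 * (Im z)^2)) integrable_on Lam"
    using L1_main(2)[OF assms(2), of 0 \<tau> x] by (simp add: KD_def)
  show ?thesis unfolding J_def using integral_add[OF i1 i2]
    by (simp add: algebra_simps add_divide_distrib)
qed

lemma J_cmult: "J (\<lambda>z. c * f z) \<tau> x = c * J f \<tau> x"
  unfolding J_def by (simp add: mult.left_commute[of _ c] times_divide_eq_right[symmetric] integral_mult_right del: times_divide_eq_right)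

lemma MJ_mult: assumes "MJ V1" "MJ V2" shows "MJ (\<lambda>z. V1 z * V2 z)"
proof -
  have t1: "\<And>g. test_fun g \<Longrightarrow> test_fun (\<lambda>z. V1 z * g z)" and j1: "JR (\<lambda>g. J (\<lambda>z. V1 z * g z))"
    using assms(1) unfolding MJ_def by auto
  have t2: "\<And>g. test_fun g \<Longrightarrow> test_fun (\<lambda>z. V2 z * g z)" and j2: "JR (\<lambda>g. J (\<lambda>z. V2 z * g z))"
    using assms(2) unfolding MJ_def by auto
  have e: "\<And>g. (\<lambda>z. V1 z * V2 z * g z) = (\<lambda>z. V1 z * (V2 z * g z))" by (simp add: mult.assoc)
  have "JR (\<lambda>g. J (\<lambda>z. V1 z * (V2 z * g z)))"
    using JR_comp'[OF j1, of "\<lambda>g z. V2 z * g z"] j2 t2 by blast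
  thus ?thesis unfolding MJ_def e using t1 t2 by blast
qed

lemma MJ_add: assumes "MJ V1" "MJ V2" shows "MJ (\<lambda>z. V1 z + V2 z)"
proof -
  have t1: "\<And>g. test_fun g \<Longrightarrow> test_fun (\<lambda>z. V1 z * g z)" and j1: "JR (\<lambda>g. J (\<lambda>z. V1 z * g z))"
    using assms(1) unfolding MJ_def by auto
  have t2: "\<And>g. test_fun g \<Longrightarrow> test_fun (\<lambda>z. V2 z * g z)" and j2: "JR (\<lambda>g. J (\<lambda>z. V2 z * g z))"
    using assms(2) unfolding MJ_def by auto
  have e: "\<And>g. (\<lambda>z. (V1 z + V2 z) * g z) = (\<lambda>z. V1 z * g z + V2 z * g z)" by (simp add: algebra_simps)
  have "JR (\<lambda>g \<tau> x. J (\<lambda>z. V1 z * g z) \<tau> x + J (\<lambda>z. V2 z * g z) \<tau> x)"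
    by (rule JR_add[OF j1 j2])
  hence "JR (\<lambda>g. J (\<lambda>z. V1 z * g z + V2 z * g z))"
    by (rule JR_cong) (simp add: J_add t1 t2)
  thus ?thesis unfolding MJ_def e using t1 t2 test_add by blast
qed

lemma MJ_const: "MJ (\<lambda>z. c)"
proof -
  have "JR (\<lambda>g \<tau> x. (\<lambda>_. c) \<tau> * J g \<tau> x)" by (rule JR_scale[OF nice_const JR_J])
  hence "JR (\<lambda>g. J (\<lambda>z. c * g z))" by (rule JR_cong) (simp add: J_cmult)
  thus ?thesis unfolding MJ_def using test_cmult by blast
qed

lemma MJ_cong:
  assumes "MJ V" "\<And>z. Im z > 0 \<Longrightarrow> V z = V' z" shows "MJ V'"
proof -
  have e: "(\<lambda>z. V' z * g z) = (\<lambda>z. V z * g z)" if g: "test_fun g" for g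
  proof
    fix z
    obtain C where C: "compact C" "C \<subseteq> Lam" "\<And>z. z \<notin> C \<Longrightarrow> g z = 0"
      using test_supp[OF g] by metis
    show "V' z * g z = V z * g z"
    proof (cases "Im z > 0")
      case True thus ?thesis using assms(2) by simp
    next
      case False hence "z \<notin> C" using C(2) by (auto simp: Lam_def)
      thus ?thesis using C(3) by simp
    qed
  qed
  have "JR (\<lambda>g. J (\<lambda>z. V' z * g z))"
    using assms(1) unfolding MJ_def by (auto intro: JR_cong simp: e)
  thus ?thesis using assms(1) e unfolding MJ_def by auto
qed

lemma MJ_pow: "MJ V \<Longrightarrow> MJ (\<lambda>z. V z ^ n)"
  by (induction n) (auto intro: MJ_mult MJ_const)

lemma MJ_sum: "finite S \<Longrightarrow> (\<And>i. i \<in> S \<Longrightarrow> MJ (V i)) \<Longrightarrow> MJ (\<lambda>z. \<Sum>i\<in>S. V i z)"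
  by (induction S rule: finite_induct) (auto intro: MJ_add MJ_const)


section \<open>The four generators of A\<close>

definition gen1 :: "complex \<Rightarrow> complex" where "gen1 z = 1 / (z - cnj z)"

lemma zcnj: "z - cnj z = 2 * \<i> * of_real (Im z)" by (simp add: complex_eq_iff)

lemma gen1_eq: "Im z > 0 \<Longrightarrow> gen1 z = (-\<i>/2) / of_real (Im z) ^ 1"
  unfolding gen1_def zcnj by (simp add: field_simps)

lemma smooth_gen1: "smooth_on Lam gen1"
  by (rule smooth_on_cong[OF open_Lam _ smooth_invIm[of "-\<i>/2" 1]]) (simp add: gen1_eq Lam_def)

lemma smooth_gen2: "smooth_on Lam (\<lambda>z. z * gen1 z)"
  by (intro smooth_mult[OF open_Lam] smooth_id smooth_gen1)
lemma smooth_gen3: "smooth_on Lam (\<lambda>z. cnj z * gen1 z)"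
  by (intro smooth_mult[OF open_Lam] smooth_cnj smooth_gen1)
lemma smooth_gen4: "smooth_on Lam (\<lambda>z. z * cnj z * gen1 z)"
  by (intro smooth_mult[OF open_Lam] smooth_id smooth_cnj smooth_gen1)

lemma half_split: "1 / (2 * a) = (1/2) * (1 / (a::complex))" by simp

lemma kern_gen1:
  assumes t: "\<tau> \<notin> half_ints" and z: "Im z > 0"
  shows "Kern \<tau> z x * gen1 z = sumKD [(\<lambda>t. -(\<i>/2) * c1 t, 0, 2, 1), (\<lambda>t. -(\<i>/2) * c2 t, 0, 0, -1)] \<tau> z x"
proof -
  have "Kern \<tau> z x * gen1 z = -(\<i>/2) * (kk \<tau> z x / of_real (Im z))"
    using z by (simp add: Kern_eq gen1_eq)
  also have "\<dots> = -(\<i>/2) * (c1 \<tau> * KD 2 (\<tau> + 1) z x + c2 \<tau> * kk (\<tau> - 1) z x)"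
    unfolding M1[OF z t] ..
  also have "\<dots> = sumKD [(\<lambda>t. -(\<i>/2) * c1 t, 0, 2, 1), (\<lambda>t. -(\<i>/2) * c2 t, 0, 0, -1)] \<tau> z x"
    using z by (simp add: KD0 algebra_simps)
  finally show ?thesis .
qed

lemma kern_gen2:
  assumes t: "\<tau> \<notin> half_ints" and z: "Im z > 0"
  shows "Kern \<tau> z x * (z * gen1 z) = sumKD [(\<lambda>t. -(\<i>/2) * c1 t, 1, 2, 1), (\<lambda>t. -(\<i>/2) * c2 t, 1, 0, -1),
     (\<lambda>t. (\<i>/4) * (1 / (t + 1)), 0, 1, 1), (\<lambda>t. 1/2, 0, 0, 0)] \<tau> z x"
proof -
  have b: "(of_real (Im z) :: complex) \<noteq> 0" using z by simp
  have "Kern \<tau> z x * (z * gen1 z) = -(\<i>/2) * (of_real (Re z) / of_real (Im z) * kk \<tau> z x) + (1/2) * kk \<tau> z x"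
    using z b unfolding gen1_def zcnj Kern_eq[OF z]
    by (subst (1 2) complex_eq[of z]) (simp add: field_simps)
  also have "\<dots> = -(\<i>/2) * (of_real x * (c1 \<tau> * KD 2 (\<tau> + 1) z x + c2 \<tau> * kk (\<tau> - 1) z x)
        - (1 / (2 * (\<tau> + 1))) * KD 1 (\<tau> + 1) z x) + (1/2) * kk \<tau> z x"
    unfolding M2[OF z t] M1[OF z t] ..
  also have "\<dots> = sumKD [(\<lambda>t. -(\<i>/2) * c1 t, 1, 2, 1), (\<lambda>t. -(\<i>/2) * c2 t, 1, 0, -1),
     (\<lambda>t. (\<i>/4) * (1 / (t + 1)), 0, 1, 1), (\<lambda>t. 1/2, 0, 0, 0)] \<tau> z x"
    using z unfolding half_split by (simp add: KD0 algebra_simps)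
  finally show ?thesis .
qed

lemma kern_gen3:
  assumes t: "\<tau> \<notin> half_ints" and z: "Im z > 0"
  shows "Kern \<tau> z x * (cnj z * gen1 z) = sumKD [(\<lambda>t. -(\<i>/2) * c1 t, 1, 2, 1), (\<lambda>t. -(\<i>/2) * c2 t, 1, 0, -1),
     (\<lambda>t. (\<i>/4) * (1 / (t + 1)), 0, 1, 1), (\<lambda>t. -1/2, 0, 0, 0)] \<tau> z x"
proof -
  have b: "(of_real (Im z) :: complex) \<noteq> 0" using z by simp
  have "Kern \<tau> z x * (cnj z * gen1 z) = -(\<i>/2) * (of_real (Re z) / of_real (Im z) * kk \<tau> z x) - (1/2) * kk \<tau> z x"
    using z b unfolding gen1_def zcnj Kern_eq[OF z]
    by (subst (1) complex_eq[of z]) (simp add: field_simps complex_cnj_add complex_cnj_mult)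
  also have "\<dots> = -(\<i>/2) * (of_real x * (c1 \<tau> * KD 2 (\<tau> + 1) z x + c2 \<tau> * kk (\<tau> - 1) z x)
        - (1 / (2 * (\<tau> + 1))) * KD 1 (\<tau> + 1) z x) - (1/2) * kk \<tau> z x"
    unfolding M2[OF z t] M1[OF z t] ..
  also have "\<dots> = sumKD [(\<lambda>t. -(\<i>/2) * c1 t, 1, 2, 1), (\<lambda>t. -(\<i>/2) * c2 t, 1, 0, -1),
     (\<lambda>t. (\<i>/4) * (1 / (t + 1)), 0, 1, 1), (\<lambda>t. -1/2, 0, 0, 0)] \<tau> z x"
    using z unfolding half_split by (simp add: KD0 algebra_simps)
  finally show ?thesis .
qed

lemma kern_gen4:
  assumes t: "\<tau> \<notin> half_ints" and z: "Im z > 0"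
  shows "Kern \<tau> z x * (z * cnj z * gen1 z) = sumKD [(\<lambda>t. -(\<i>/2), 0, 0, 1), (\<lambda>t. -(\<i>/2) * c1 t, 2, 2, 1),
     (\<lambda>t. -(\<i>/2) * c2 t, 2, 0, -1), (\<lambda>t. (\<i>/2) * (1 / (t + 1)), 1, 1, 1)] \<tau> z x"
proof -
  have b: "(of_real (Im z) :: complex) \<noteq> 0" using z by simp
  have zz: "z * cnj z = of_real ((Re z)^2 + (Im z)^2)" by (simp add: complex_eq_iff power2_eq_square)
  have "Kern \<tau> z x * (z * cnj z * gen1 z) = -(\<i>/2) * (of_real ((Re z)^2 + (Im z)^2) / of_real (Im z) * kk \<tau> z x)"
    using z b unfolding gen1_def zz Kern_eq[OF z] zcnj by (simp add: field_simps)
  also have "\<dots> = -(\<i>/2) * (kk (\<tau> + 1) z x + of_real x ^ 2 * (c1 \<tau> * KD 2 (\<tau> + 1) z x + c2 \<tau> * kk (\<tau> - 1) z x)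
      - of_real x * (1 / (\<tau> + 1)) * KD 1 (\<tau> + 1) z x)"
    unfolding M3[OF z t] M1[OF z t] ..
  also have "\<dots> = sumKD [(\<lambda>t. -(\<i>/2), 0, 0, 1), (\<lambda>t. -(\<i>/2) * c1 t, 2, 2, 1),
     (\<lambda>t. -(\<i>/2) * c2 t, 2, 0, -1), (\<lambda>t. (\<i>/2) * (1 / (t + 1)), 1, 1, 1)] \<tau> z x"
    using z by (simp add: KD0 algebra_simps power2_eq_square)
  finally show ?thesis .
qed

lemma nice_m: "nice c \<Longrightarrow> nice (\<lambda>t. a * c t)" by (intro nice_mult nice_const)

lemma MJ_gen1: "MJ gen1"
  by (rule MJ_intro[OF smooth_gen1 JR_from_kernel[OF _ kern_gen1]])
     (simp only: niceL_Cons niceL_Nil, intro conjI TrueI nice_m nice_c1 nice_c2)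
lemma MJ_gen2: "MJ (\<lambda>z. z * gen1 z)"
  by (rule MJ_intro[OF smooth_gen2 JR_from_kernel[OF _ kern_gen2]])
     (simp only: niceL_Cons niceL_Nil, intro conjI TrueI nice_m nice_c1 nice_c2 nice_inv1' nice_const)
lemma MJ_gen3: "MJ (\<lambda>z. cnj z * gen1 z)"
  by (rule MJ_intro[OF smooth_gen3 JR_from_kernel[OF _ kern_gen3]])
     (simp only: niceL_Cons niceL_Nil, intro conjI TrueI nice_m nice_c1 nice_c2 nice_inv1' nice_const)
lemma MJ_gen4: "MJ (\<lambda>z. z * cnj z * gen1 z)"
  by (rule MJ_intro[OF smooth_gen4 JR_from_kernel[OF _ kern_gen4]])
     (simp only: niceL_Cons niceL_Nil, intro conjI TrueI nice_m nice_c1 nice_c2 nice_inv1' nice_const)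

lemma mono_eq1:
  assumes z: "Im z > 0" and "q \<le> p" "p \<le> n"
  shows "z^p * cnj z^q / (z - cnj z)^n = (z * cnj z * gen1 z)^q * (z * gen1 z)^(p - q) * gen1 z ^ (n - p)"
proof -
  obtain k1 where k1: "p = q + k1" using assms(2) le_Suc_ex by blast
  obtain k2 where k2: "n = p + k2" using assms(3) le_Suc_ex by blast
  have d: "z - cnj z \<noteq> 0" using z unfolding zcnj by simp
  show ?thesis unfolding gen1_def k2 k1 using d
    by (simp add: power_add power_mult_distrib power_divide field_simps)
qed

lemma mono_eq2:
  assumes z: "Im z > 0" and "p \<le> q" "q \<le> n"
  shows "z^p * cnj z^q / (z - cnj z)^n = (z * cnj z * gen1 z)^p * (cnj z * gen1 z)^(q - p) * gen1 z ^ (n - q)"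
proof -
  obtain k1 where k1: "q = p + k1" using assms(2) le_Suc_ex by blast
  obtain k2 where k2: "n = q + k2" using assms(3) le_Suc_ex by blast
  have d: "z - cnj z \<noteq> 0" using z unfolding zcnj by simp
  show ?thesis unfolding gen1_def k2 k1 using d
    by (simp add: power_add power_mult_distrib power_divide field_simps)
qed

lemma MJ_mono:
  assumes "p \<le> n" "q \<le> n"
  shows "MJ (\<lambda>z. z^p * cnj z^q / (z - cnj z)^n)"
proof (cases "q \<le> p")
  case True
  have "MJ (\<lambda>z. (z * cnj z * gen1 z)^q * (z * gen1 z)^(p - q) * gen1 z ^ (n - p))"
    by (intro MJ_mult MJ_pow MJ_gen1 MJ_gen2 MJ_gen4)
  thus ?thesis by (rule MJ_cong) (use mono_eq1 True assms in auto)
next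
  case False
  have "MJ (\<lambda>z. (z * cnj z * gen1 z)^p * (cnj z * gen1 z)^(q - p) * gen1 z ^ (n - q))"
    by (intro MJ_mult MJ_pow MJ_gen1 MJ_gen3 MJ_gen4)
  thus ?thesis by (rule MJ_cong) (use mono_eq2 False assms in auto)
qed

lemma MJ_A: assumes "V \<in> A_space" shows "MJ V"
proof -
  obtain S c where S: "finite S" "\<forall>(n, p, q) \<in> S. (p, q) \<in> Omega n"
    and V: "V = (\<lambda>z. \<Sum>(n, p, q)\<in>S. c (n, p, q) * z ^ p * cnj z ^ q / (z - cnj z) ^ n)"
    using assms unfolding A_space_def by blast
  have "MJ (\<lambda>z. \<Sum>i\<in>S. (case i of (n, p, q) \<Rightarrow> c (n, p, q) * z ^ p * cnj z ^ q / (z - cnj z) ^ n))"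
  proof (rule MJ_sum[OF S(1)])
    fix i assume i: "i \<in> S"
    obtain n p q where e: "i = (n,p,q)" by (cases i)
    have "p \<le> n" "q \<le> n" using S(2) i e by (auto simp: Omega_def)
    hence "MJ (\<lambda>z. c (n,p,q) * (z ^ p * cnj z ^ q / (z - cnj z) ^ n))"
      by (intro MJ_mult MJ_const MJ_mono)
    thus "MJ (\<lambda>z. case i of (n, p, q) \<Rightarrow> c (n, p, q) * z ^ p * cnj z ^ q / (z - cnj z) ^ n)"
      by (simp add: e mult.assoc)
  qed
  thus ?thesis unfolding V by (simp add: case_prod_beta)
qed


section \<open>Integration by parts on the plane\<close>

lemma integral_UNIV_box:
  fixes G :: "complex \<Rightarrow> complex"
  assumes "continuous_on UNIV G" "\<And>z. z \<notin> K \<Longrightarrow> G z = 0" "K \<subseteq> cbox a b"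
  shows "(G has_integral integral (cbox a b) G) UNIV"
proof -
  have "G integrable_on cbox a b"
    by (rule integrable_continuous[OF continuous_on_subset[OF assms(1)]]) auto
  hence "(G has_integral integral (cbox a b) G) (cbox a b)" by (simp add: integrable_integral)
  thus ?thesis by (rule has_integral_on_superset) (use assms(2,3) in auto)
qed

lemma translate_integral:
  fixes \<Psi> :: "complex \<Rightarrow> complex"
  assumes C: "compact C" and z: "\<And>z. z \<notin> C \<Longrightarrow> \<Psi> z = 0" and c: "continuous_on UNIV \<Psi>"
  shows "((\<lambda>t. \<Psi> (t + c)) has_integral integral UNIV \<Psi>) UNIV"
proof -
  have "compact (C \<union> (\<lambda>t. t - c) ` C)"
    using C by (intro compact_Un compact_continuous_image continuous_intros) auto
  then obtain a where a: "C \<union> (\<lambda>t. t - c) ` C \<subseteq> cbox (-a) a"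
    using bounded_subset_cbox_symmetric[OF compact_imp_bounded] by metis
  have I: "(\<Psi> has_integral integral (cbox (-a) a) \<Psi>) UNIV"
    by (rule integral_UNIV_box[OF c z]) (use a in auto)
  have Ib: "(\<Psi> has_integral integral (cbox (-a) a) \<Psi>) (cbox (-a) a)"
    using integrable_continuous[OF continuous_on_subset[OF c]] by (simp add: integrable_integral)
  from has_integral_affinity[OF Ib, of 1 c]
  have "((\<lambda>x. \<Psi> (x + c)) has_integral integral (cbox (-a) a) \<Psi>) ((\<lambda>x. x + - c) ` cbox (-a) a)"
    by simp
  hence "((\<lambda>x. \<Psi> (x + c)) has_integral integral (cbox (-a) a) \<Psi>) UNIV"
  proof (rule has_integral_on_superset)
    fix x assume x: "x \<notin> (\<lambda>x. x + - c) ` cbox (-a) a"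
    have "x + c \<notin> C"
    proof
      assume "x + c \<in> C"
      hence "x + c \<in> cbox (-a) a" using a by auto
      hence "x \<in> (\<lambda>x. x + - c) ` cbox (-a) a" by (intro image_eqI[of _ _ "x + c"]) auto
      thus False using x by blast
    qed
    thus "\<Psi> (x + c) = 0" using z by blast
  qed auto
  moreover have "integral UNIV \<Psi> = integral (cbox (-a) a) \<Psi>" using I by (simp add: integral_unique)
  ultimately show ?thesis by simp
qed

lemma IBP_core:
  fixes \<Psi> :: "complex \<Rightarrow> complex" and \<Psi>' :: "complex \<Rightarrow> complex \<Rightarrow> complex"
  assumes C: "compact C" and \<Psi>0: "\<And>z. z \<notin> C \<Longrightarrow> \<Psi> z = 0"
    and D: "\<And>z. (\<Psi> has_derivative \<Psi>' z) (at z)"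
    and cont: "continuous_on UNIV (\<lambda>z. \<Psi>' z v)"
  shows "((\<lambda>z. \<Psi>' z v) has_integral 0) UNIV"
proof -
  have cP: "continuous_on UNIV \<Psi>"
    by (intro continuous_at_imp_continuous_on ballI has_derivative_continuous[OF D])
  have P'0: "\<Psi>' z v = 0" if z: "z \<notin> C" for z
  proof -
    have o: "open (-C)" using C compact_imp_closed by blast
    have "(\<Psi> has_derivative (\<lambda>h. 0)) (at z)"
      by (rule has_derivative_transform_within_open[OF has_derivative_const o]) (use z \<Psi>0 in auto)
    hence "\<Psi>' z = (\<lambda>h. 0)" using has_derivative_unique[OF D] by blast
    thus ?thesis by simp
  qed
  define C2 where "C2 = (\<lambda>p. fst p - of_real (snd p) * v) ` (C \<times> {-1..1::real})"
  have "compact C2" unfolding C2_def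
    using C by (intro compact_continuous_image compact_Times continuous_intros) auto
  then obtain a where a: "C2 \<subseteq> cbox (-a) a"
    using bounded_subset_cbox_symmetric[OF compact_imp_bounded] by metis
  have CC2: "C \<subseteq> C2" unfolding C2_def by (force intro: image_eqI[of _ _ "(c, 0)" for c])
  define U where "U = {-1<..<1::real}"
  have U: "open U" "convex U" "0 \<in> U" unfolding U_def by auto
  have fz: "\<Psi> (t + of_real h * v) = 0" if "t \<notin> cbox (-a) a" "h \<in> {-1..1}" for t h
  proof -
    have "t + of_real h * v \<notin> C"
    proof
      assume "t + of_real h * v \<in> C"
      hence "t \<in> C2" unfolding C2_def using that(2)
        by (intro image_eqI[of _ _ "(t + of_real h * v, h)"]) auto
      thus False using a that(1) by blast
    qed
    thus ?thesis using \<Psi>0 by blast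
  qed
  have const: "integral (cbox (-a) a) (\<lambda>t. \<Psi> (t + of_real h * v)) = integral UNIV \<Psi>" if h: "h \<in> {-1..1}" for h
  proof -
    have c1: "continuous_on UNIV (\<lambda>t. \<Psi> (t + of_real h * v))"
      by (rule continuous_on_compose2[OF cP]) (auto intro!: continuous_intros)
    have "((\<lambda>t. \<Psi> (t + of_real h * v)) has_integral integral (cbox (-a) a) (\<lambda>t. \<Psi> (t + of_real h * v))) UNIV"
      by (rule integral_UNIV_box[OF c1, of "cbox (-a) a"]) (use fz h in auto)
    moreover have "((\<lambda>t. \<Psi> (t + of_real h * v)) has_integral integral UNIV \<Psi>) UNIV"
      by (rule translate_integral[OF C \<Psi>0 cP])
    ultimately show ?thesis using has_integral_unique by blast
  qed
  have cont2: "continuous_on (U \<times> cbox (-a) a) (\<lambda>(h, t). \<Psi>' (t + of_real h * v) v)"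
  proof -
    have "continuous_on (U \<times> cbox (-a) a) (\<lambda>p. (\<lambda>z. \<Psi>' z v) (snd p + of_real (fst p) * v))"
      by (rule continuous_on_compose2[OF cont]) (auto intro!: continuous_intros)
    thus ?thesis by (simp add: case_prod_beta)
  qed
  have LR: "((\<lambda>h. integral (cbox (-a) a) (\<lambda>t. \<Psi> (t + of_real h * v))) has_vector_derivative
      integral (cbox (-a) a) (\<lambda>t. \<Psi>' (t + of_real 0 * v) v)) (at 0 within U)"
  proof (rule leibniz_rule_vector_derivative[where fx = "\<lambda>h t. \<Psi>' (t + of_real h * v) v"])
    fix h t assume "h \<in> U" "t \<in> cbox (-a) a"
    have dg: "((\<lambda>h. t + of_real h * v) has_derivative (\<lambda>k. of_real k * v)) (at h within U)"
      by (auto intro!: derivative_eq_intros)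
    have "((\<lambda>h. \<Psi> (t + of_real h * v)) has_derivative (\<lambda>k. \<Psi>' (t + of_real h * v) (of_real k * v))) (at h within U)"
      using has_derivative_compose[OF dg D] .
    moreover have "\<Psi>' (t + of_real h * v) (of_real k * v) = k *\<^sub>R \<Psi>' (t + of_real h * v) v" for k
    proof -
      have "linear (\<Psi>' (t + of_real h * v))" using D has_derivative_linear by blast
      hence "\<Psi>' (t + of_real h * v) (k *\<^sub>R v) = k *\<^sub>R \<Psi>' (t + of_real h * v) v" by (rule linear_scale)
      thus ?thesis by (simp add: scaleR_conv_of_real)
    qed
    ultimately show "((\<lambda>h. \<Psi> (t + of_real h * v)) has_vector_derivative \<Psi>' (t + of_real h * v) v) (at h within U)"
      unfolding has_vector_derivative_def by simp
  next
    fix h assume "h \<in> U"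
    show "(\<lambda>t. \<Psi> (t + of_real h * v)) integrable_on cbox (-a) a"
      by (rule integrable_continuous, rule continuous_on_compose2[OF cP]) (auto intro!: continuous_intros)
  qed (use cont2 U in auto)
  hence LR': "((\<lambda>h. integral (cbox (-a) a) (\<lambda>t. \<Psi> (t + of_real h * v))) has_vector_derivative
      integral (cbox (-a) a) (\<lambda>t. \<Psi>' t v)) (at 0)"
    using at_within_open[OF U(3) U(1)] by simp
  have "((\<lambda>h. integral (cbox (-a) a) (\<lambda>t. \<Psi> (t + of_real h * v))) has_vector_derivative 0) (at 0)"
    by (rule has_vector_derivative_transform_within_open[OF has_vector_derivative_const U(1) U(3)])
       (use const in \<open>auto simp: U_def\<close>)
  hence I0: "integral (cbox (-a) a) (\<lambda>t. \<Psi>' t v) = 0" using vector_derivative_unique_at[OF LR'] by simp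
  have "((\<lambda>z. \<Psi>' z v) has_integral integral (cbox (-a) a) (\<lambda>t. \<Psi>' t v)) UNIV"
    by (rule integral_UNIV_box[OF cont, of C]) (use P'0 CC2 a in auto)
  thus ?thesis unfolding I0 .
qed

lemma test_pdir_cont: "test_fun g \<Longrightarrow> continuous_on Lam (pdirs [v] g)"
  unfolding test_fun_def smooth_on_def
  by (intro continuous_at_imp_continuous_on ballI differentiable_imp_continuous_within) blast

lemma test_pdir_zero:
  assumes "test_fun g" "compact C" "\<And>z. z \<notin> C \<Longrightarrow> g z = 0" "z \<notin> C"
  shows "pdirs [v] g z = 0"
  using fd_zero_outside[OF assms(2,3,4)] by simp

lemma restrict_cont:
  fixes X :: "complex \<Rightarrow> complex"
  assumes "continuous_on Lam X" "compact C" "C \<subseteq> Lam" "\<And>z. z \<in> Lam \<Longrightarrow> z \<notin> C \<Longrightarrow> X z = 0"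
  shows "continuous_on UNIV (\<lambda>z. if z \<in> Lam then X z else 0)"
proof (rule LOC1[OF open_Lam assms(2,3)])
  show "continuous_on Lam (\<lambda>z. if z \<in> Lam then X z else 0)"
    by (rule continuous_on_eq[OF assms(1)]) auto
qed (use assms(4) in auto)

lemma IBP_W:
  assumes g: "test_fun g"
    and TD: "\<And>z. z \<in> Lam \<Longrightarrow> (\<Theta> has_derivative \<Theta>' z) (at z)"
    and TC: "\<And>v. continuous_on Lam (\<lambda>z. \<Theta>' z v)"
  shows "((\<lambda>z. if z \<in> Lam then \<Theta> z * pdirs [v] g z + \<Theta>' z v * g z else 0) has_integral 0) UNIV"
proof -
  obtain C where C: "compact C" "C \<subseteq> Lam" "\<And>z. z \<notin> C \<Longrightarrow> g z = 0"
    using test_supp[OF g] by metis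
  have gd: "(g has_derivative frechet_derivative g (at z)) (at z)" if "z \<in> Lam" for z
    using g that unfolding test_fun_def smooth_on_def frechet_derivative_works by (metis pdirs.simps(1))
  define \<Psi> where "\<Psi> z = (if z \<in> Lam then \<Theta> z * g z else 0)" for z
  define \<Psi>' where "\<Psi>' z = (if z \<in> Lam then (\<lambda>h. \<Theta> z * frechet_derivative g (at z) h + \<Theta>' z h * g z) else (\<lambda>h. 0))" for z
  have \<Psi>0: "\<Psi> z = 0" if "z \<notin> C" for z using C(3)[OF that] by (simp add: \<Psi>_def)
  have D: "(\<Psi> has_derivative \<Psi>' z) (at z)" for z
  proof (cases "z \<in> Lam")
    case True
    have "((\<lambda>y. \<Theta> y * g y) has_derivative (\<lambda>h. \<Theta> z * frechet_derivative g (at z) h + \<Theta>' z h * g z)) (at z)"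
      by (rule has_derivative_mult[OF TD[OF True] gd[OF True]])
    hence "(\<Psi> has_derivative (\<lambda>h. \<Theta> z * frechet_derivative g (at z) h + \<Theta>' z h * g z)) (at z)"
      by (rule has_derivative_transform_within_open[OF _ open_Lam True]) (simp add: \<Psi>_def)
    thus ?thesis using True by (simp add: \<Psi>'_def)
  next
    case False
    hence z: "z \<notin> C" using C(2) by blast
    have o: "open (-C)" using C(1) compact_imp_closed by blast
    have "(\<Psi> has_derivative (\<lambda>h. 0)) (at z)"
      by (rule has_derivative_transform_within_open[OF has_derivative_const o]) (use z \<Psi>0 in auto)
    thus ?thesis using False by (simp add: \<Psi>'_def)
  qed
  have Tc: "continuous_on Lam \<Theta>"
    by (intro continuous_at_imp_continuous_on ballI has_derivative_continuous[OF TD])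
  have cont: "continuous_on UNIV (\<lambda>z. \<Psi>' z v)"
  proof -
    have c0: "continuous_on UNIV (\<lambda>z. if z \<in> Lam then \<Theta> z * pdirs [v] g z + \<Theta>' z v * g z else 0)"
    proof (rule restrict_cont[OF _ C(1,2)])
      show "continuous_on Lam (\<lambda>z. \<Theta> z * pdirs [v] g z + \<Theta>' z v * g z)"
        by (intro continuous_intros Tc TC test_pdir_cont[OF g] continuous_on_subset[OF test_cont[OF g]]) auto
      fix z assume "z \<in> Lam" "z \<notin> C"
      thus "\<Theta> z * pdirs [v] g z + \<Theta>' z v * g z = 0"
        using test_pdir_zero[OF g C(1) C(3)] C(3) by simp
    qed
    have eq: "(\<lambda>z. \<Psi>' z v) = (\<lambda>z. if z \<in> Lam then \<Theta> z * pdirs [v] g z + \<Theta>' z v * g z else 0)"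
      by (auto simp: \<Psi>'_def)
    show ?thesis unfolding eq by (rule c0)
  qed
  have H: "((\<lambda>z. \<Psi>' z v) has_integral 0) UNIV" by (rule IBP_core[OF C(1) \<Psi>0 D cont])
  have eq: "(\<lambda>z. \<Psi>' z v) = (\<lambda>z. if z \<in> Lam then \<Theta> z * pdirs [v] g z + \<Theta>' z v * g z else 0)"
    by (auto simp: \<Psi>'_def)
  show ?thesis using H unfolding eq .
qed

lemma IBP_parts:
  assumes g: "test_fun g"
    and TD: "\<And>z. z \<in> Lam \<Longrightarrow> (\<Theta> has_derivative \<Theta>' z) (at z)"
    and TC: "\<And>v. continuous_on Lam (\<lambda>z. \<Theta>' z v)"
  obtains IA IB where
    "((\<lambda>z. if z \<in> Lam then \<Theta> z * pdirs [v] g z else 0) has_integral IA) UNIV"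
    "((\<lambda>z. if z \<in> Lam then \<Theta>' z v * g z else 0) has_integral IB) UNIV"
    "IA + IB = 0"
proof -
  obtain C where C: "compact C" "C \<subseteq> Lam" "\<And>z. z \<notin> C \<Longrightarrow> g z = 0"
    using test_supp[OF g] by metis
  obtain a where a: "C \<subseteq> cbox (-a) a"
    using bounded_subset_cbox_symmetric[OF compact_imp_bounded[OF C(1)]] by metis
  have Tc: "continuous_on Lam \<Theta>"
    by (intro continuous_at_imp_continuous_on ballI has_derivative_continuous[OF TD])
  have cA: "continuous_on UNIV (\<lambda>z. if z \<in> Lam then \<Theta> z * pdirs [v] g z else 0)"
  proof (rule restrict_cont[OF _ C(1,2)])
    show "continuous_on Lam (\<lambda>z. \<Theta> z * pdirs [v] g z)"
      by (intro continuous_on_mult Tc test_pdir_cont[OF g])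
    fix z assume z: "z \<notin> C"
    show "\<Theta> z * pdirs [v] g z = 0" using test_pdir_zero[OF g C(1) C(3) z, of v] by simp
  qed
  have cB: "continuous_on UNIV (\<lambda>z. if z \<in> Lam then \<Theta>' z v * g z else 0)"
    by (rule restrict_cont[OF _ C(1,2)])
       (auto intro!: continuous_intros TC continuous_on_subset[OF test_cont[OF g]] simp: C(3))
  have hA: "((\<lambda>z. if z \<in> Lam then \<Theta> z * pdirs [v] g z else 0) has_integral
      integral (cbox (-a) a) (\<lambda>z. if z \<in> Lam then \<Theta> z * pdirs [v] g z else 0)) UNIV"
    by (rule integral_UNIV_box[OF cA, of C]) (use a test_pdir_zero[OF g C(1) C(3)] in auto)
  have hB: "((\<lambda>z. if z \<in> Lam then \<Theta>' z v * g z else 0) has_integral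
      integral (cbox (-a) a) (\<lambda>z. if z \<in> Lam then \<Theta>' z v * g z else 0)) UNIV"
    by (rule integral_UNIV_box[OF cB, of C]) (use a C(3) in auto)
  have "((\<lambda>z. (if z \<in> Lam then \<Theta> z * pdirs [v] g z else 0) + (if z \<in> Lam then \<Theta>' z v * g z else 0)) has_integral
     integral (cbox (-a) a) (\<lambda>z. if z \<in> Lam then \<Theta> z * pdirs [v] g z else 0) +
     integral (cbox (-a) a) (\<lambda>z. if z \<in> Lam then \<Theta>' z v * g z else 0)) UNIV"
    by (rule has_integral_add[OF hA hB])
  moreover have "(\<lambda>z. (if z \<in> Lam then \<Theta> z * pdirs [v] g z else 0) + (if z \<in> Lam then \<Theta>' z v * g z else 0))
     = (\<lambda>z. if z \<in> Lam then \<Theta> z * pdirs [v] g z + \<Theta>' z v * g z else 0)" by auto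
  ultimately have "((\<lambda>z. if z \<in> Lam then \<Theta> z * pdirs [v] g z + \<Theta>' z v * g z else 0) has_integral
     integral (cbox (-a) a) (\<lambda>z. if z \<in> Lam then \<Theta> z * pdirs [v] g z else 0) +
     integral (cbox (-a) a) (\<lambda>z. if z \<in> Lam then \<Theta>' z v * g z else 0)) UNIV" by simp
  hence "integral (cbox (-a) a) (\<lambda>z. if z \<in> Lam then \<Theta> z * pdirs [v] g z else 0) +
     integral (cbox (-a) a) (\<lambda>z. if z \<in> Lam then \<Theta>' z v * g z else 0) = 0"
    using IBP_W[OF g TD TC, of v] by (rule has_integral_unique)
  thus ?thesis by (rule that[OF hA hB])
qed

lemma IBP_Dz:
  assumes g: "test_fun g"
    and TD: "\<And>z. z \<in> Lam \<Longrightarrow> (\<Theta> has_derivative \<Theta>' z) (at z)"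
    and TC: "\<And>v. continuous_on Lam (\<lambda>z. \<Theta>' z v)"
  obtains I where "((\<lambda>z. \<Theta> z * Dz g z) has_integral - I) Lam"
    "((\<lambda>z. (\<Theta>' z 1 - \<i> * \<Theta>' z \<i>) / 2 * g z) has_integral I) Lam"
proof -
  obtain IA1 IB1 where 1: "((\<lambda>z. if z \<in> Lam then \<Theta> z * pdirs [1] g z else 0) has_integral IA1) UNIV"
    "((\<lambda>z. if z \<in> Lam then \<Theta>' z 1 * g z else 0) has_integral IB1) UNIV" "IA1 + IB1 = 0"
    using IBP_parts[OF g TD TC] by blast
  obtain IA2 IB2 where 2: "((\<lambda>z. if z \<in> Lam then \<Theta> z * pdirs [\<i>] g z else 0) has_integral IA2) UNIV"
    "((\<lambda>z. if z \<in> Lam then \<Theta>' z \<i> * g z else 0) has_integral IB2) UNIV" "IA2 + IB2 = 0"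
    using IBP_parts[OF g TD TC] by blast
  have "((\<lambda>z. (1/2) * (if z \<in> Lam then \<Theta> z * pdirs [1] g z else 0) + (-\<i>/2) * (if z \<in> Lam then \<Theta> z * pdirs [\<i>] g z else 0))
      has_integral (1/2) * IA1 + (-\<i>/2) * IA2) UNIV"
    by (intro has_integral_add has_integral_mult_right 1 2)
  moreover have "(\<lambda>z. (1/2) * (if z \<in> Lam then \<Theta> z * pdirs [1] g z else 0) + (-\<i>/2) * (if z \<in> Lam then \<Theta> z * pdirs [\<i>] g z else 0))
     = (\<lambda>z. if z \<in> Lam then \<Theta> z * Dz g z else 0)"
    by (auto simp: Dz_alt algebra_simps)
  ultimately have "((\<lambda>z. if z \<in> Lam then \<Theta> z * Dz g z else 0) has_integral (1/2) * IA1 + (-\<i>/2) * IA2) UNIV"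
    by simp
  hence A: "((\<lambda>z. \<Theta> z * Dz g z) has_integral (1/2) * IA1 + (-\<i>/2) * IA2) Lam"
    by (simp only: has_integral_restrict_UNIV)
  have "((\<lambda>z. (1/2) * (if z \<in> Lam then \<Theta>' z 1 * g z else 0) + (-\<i>/2) * (if z \<in> Lam then \<Theta>' z \<i> * g z else 0))
      has_integral (1/2) * IB1 + (-\<i>/2) * IB2) UNIV"
    by (intro has_integral_add has_integral_mult_right 1 2)
  moreover have "(\<lambda>z. (1/2) * (if z \<in> Lam then \<Theta>' z 1 * g z else 0) + (-\<i>/2) * (if z \<in> Lam then \<Theta>' z \<i> * g z else 0))
     = (\<lambda>z. if z \<in> Lam then (\<Theta>' z 1 - \<i> * \<Theta>' z \<i>) / 2 * g z else 0)"
    by (rule ext) (simp add: field_simps)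
  ultimately have "((\<lambda>z. if z \<in> Lam then (\<Theta>' z 1 - \<i> * \<Theta>' z \<i>) / 2 * g z else 0) has_integral (1/2) * IB1 + (-\<i>/2) * IB2) UNIV"
    by simp
  hence B: "((\<lambda>z. (\<Theta>' z 1 - \<i> * \<Theta>' z \<i>) / 2 * g z) has_integral (1/2) * IB1 + (-\<i>/2) * IB2) Lam"
    by (simp only: has_integral_restrict_UNIV)
  have "(1/2) * IA1 + (-\<i>/2) * IA2 = - ((1/2) * IB1 + (-\<i>/2) * IB2)"
    using 1(3) 2(3) by (simp add: algebra_simps eq_neg_iff_add_eq_0[symmetric])
  thus ?thesis using that[OF _ B] A by simp
qed

lemma IBP_Dzb:
  assumes g: "test_fun g"
    and TD: "\<And>z. z \<in> Lam \<Longrightarrow> (\<Theta> has_derivative \<Theta>' z) (at z)"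
    and TC: "\<And>v. continuous_on Lam (\<lambda>z. \<Theta>' z v)"
  obtains I where "((\<lambda>z. \<Theta> z * Dzb g z) has_integral - I) Lam"
    "((\<lambda>z. (\<Theta>' z 1 + \<i> * \<Theta>' z \<i>) / 2 * g z) has_integral I) Lam"
proof -
  obtain IA1 IB1 where 1: "((\<lambda>z. if z \<in> Lam then \<Theta> z * pdirs [1] g z else 0) has_integral IA1) UNIV"
    "((\<lambda>z. if z \<in> Lam then \<Theta>' z 1 * g z else 0) has_integral IB1) UNIV" "IA1 + IB1 = 0"
    using IBP_parts[OF g TD TC] by blast
  obtain IA2 IB2 where 2: "((\<lambda>z. if z \<in> Lam then \<Theta> z * pdirs [\<i>] g z else 0) has_integral IA2) UNIV"
    "((\<lambda>z. if z \<in> Lam then \<Theta>' z \<i> * g z else 0) has_integral IB2) UNIV" "IA2 + IB2 = 0"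
    using IBP_parts[OF g TD TC] by blast
  have "((\<lambda>z. (1/2) * (if z \<in> Lam then \<Theta> z * pdirs [1] g z else 0) + (\<i>/2) * (if z \<in> Lam then \<Theta> z * pdirs [\<i>] g z else 0))
      has_integral (1/2) * IA1 + (\<i>/2) * IA2) UNIV"
    by (intro has_integral_add has_integral_mult_right 1 2)
  moreover have "(\<lambda>z. (1/2) * (if z \<in> Lam then \<Theta> z * pdirs [1] g z else 0) + (\<i>/2) * (if z \<in> Lam then \<Theta> z * pdirs [\<i>] g z else 0))
     = (\<lambda>z. if z \<in> Lam then \<Theta> z * Dzb g z else 0)"
    by (auto simp: Dzb_alt algebra_simps)
  ultimately have "((\<lambda>z. if z \<in> Lam then \<Theta> z * Dzb g z else 0) has_integral (1/2) * IA1 + (\<i>/2) * IA2) UNIV"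
    by simp
  hence A: "((\<lambda>z. \<Theta> z * Dzb g z) has_integral (1/2) * IA1 + (\<i>/2) * IA2) Lam"
    by (simp only: has_integral_restrict_UNIV)
  have "((\<lambda>z. (1/2) * (if z \<in> Lam then \<Theta>' z 1 * g z else 0) + (\<i>/2) * (if z \<in> Lam then \<Theta>' z \<i> * g z else 0))
      has_integral (1/2) * IB1 + (\<i>/2) * IB2) UNIV"
    by (intro has_integral_add has_integral_mult_right 1 2)
  moreover have "(\<lambda>z. (1/2) * (if z \<in> Lam then \<Theta>' z 1 * g z else 0) + (\<i>/2) * (if z \<in> Lam then \<Theta>' z \<i> * g z else 0))
     = (\<lambda>z. if z \<in> Lam then (\<Theta>' z 1 + \<i> * \<Theta>' z \<i>) / 2 * g z else 0)"
    by (rule ext) (simp add: field_simps)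
  ultimately have "((\<lambda>z. if z \<in> Lam then (\<Theta>' z 1 + \<i> * \<Theta>' z \<i>) / 2 * g z else 0) has_integral (1/2) * IB1 + (\<i>/2) * IB2) UNIV"
    by simp
  hence B: "((\<lambda>z. (\<Theta>' z 1 + \<i> * \<Theta>' z \<i>) / 2 * g z) has_integral (1/2) * IB1 + (\<i>/2) * IB2) Lam"
    by (simp only: has_integral_restrict_UNIV)
  have "(1/2) * IA1 + (\<i>/2) * IA2 = - ((1/2) * IB1 + (\<i>/2) * IB2)"
    using 1(3) 2(3) by (simp add: algebra_simps eq_neg_iff_add_eq_0[symmetric])
  thus ?thesis using that[OF _ B] A by simp
qed


definition wvd :: "complex \<Rightarrow> real \<Rightarrow> complex \<Rightarrow> real" where
  "wvd z x h = ((-2 * (x - Re z) * Re h + 2 * Im z * Im h) * Im z - ((x - Re z)^2 + (Im z)^2) * Im h) / (Im z)^2"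

lemma wv_has_derivative_z:
  assumes "Im z > 0"
  shows "((\<lambda>y. wv y x) has_derivative (\<lambda>h. wvd z x h)) (at z)"
proof -
  have "((\<lambda>y. ((x - Re y)^2 + (Im y)^2) / Im y) has_derivative
     (\<lambda>h. ((of_nat 2 * (0 - Re h) * (x - Re z)^(2-1) + of_nat 2 * Im h * (Im z)^(2-1)) * Im z
        - ((x - Re z)^2 + (Im z)^2) * Im h) / (Im z * Im z))) (at z)"
    using assms
    by (intro has_derivative_divide' has_derivative_add has_derivative_power has_derivative_diff
        has_derivative_const has_derivative_Re has_derivative_Im has_derivative_ident) auto
  moreover have "(\<lambda>h. ((of_nat 2 * (0 - Re h) * (x - Re z)^(2-1) + of_nat 2 * Im h * (Im z)^(2-1)) * Im z
        - ((x - Re z)^2 + (Im z)^2) * Im h) / (Im z * Im z)) = (\<lambda>h. wvd z x h)"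
    by (auto simp: fun_eq_iff wvd_def power2_eq_square algebra_simps)
  ultimately show ?thesis unfolding wv_def by simp
qed

lemma kk_has_derivative_z:
  assumes z: "Im z > 0"
  shows "((\<lambda>y. kk \<sigma> y x) has_derivative (\<lambda>h. \<sigma> * of_real (wvd z x h) * kk (\<sigma> - 1) z x)) (at z)"
proof -
  have pos: "wv z x > 0" using wv_pos[OF z] .
  have d1: "((\<lambda>y. \<sigma> * of_real (ln (wv y x))) has_derivative (\<lambda>h. \<sigma> * of_real (wvd z x h * inverse (wv z x)))) (at z)"
    by (intro has_derivative_mult_right has_derivative_of_real has_derivative_ln wv_has_derivative_z z pos)
  have de: "(exp has_derivative (\<lambda>h. exp (\<sigma> * of_real (ln (wv z x))) * h)) (at (\<sigma> * of_real (ln (wv z x))))"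
    using DERIV_exp[of "\<sigma> * of_real (ln (wv z x))"] unfolding has_field_derivative_def .
  have H: "((\<lambda>y. kk \<sigma> y x) has_derivative
        (\<lambda>h. exp (\<sigma> * of_real (ln (wv z x))) * (\<sigma> * of_real (wvd z x h * inverse (wv z x))))) (at z)"
    unfolding kk_def using has_derivative_compose[OF d1 de] .
  have e1: "exp (\<sigma> * of_real (ln (wv z x))) = of_real (wv z x) * kk (\<sigma> - 1) z x"
    using kk_minus1[OF z, of \<sigma> x] unfolding kk_def .
  have eq: "(\<lambda>h. exp (\<sigma> * of_real (ln (wv z x))) * (\<sigma> * of_real (wvd z x h * inverse (wv z x))))
      = (\<lambda>h. \<sigma> * of_real (wvd z x h) * kk (\<sigma> - 1) z x)"
    unfolding e1 using pos by (auto simp: fun_eq_iff field_simps)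
  show ?thesis using H unfolding eq .
qed

definition DD :: "complex \<Rightarrow> complex" where "DD z = of_real (4 * (Im z)^2)"
definition DD' :: "complex \<Rightarrow> complex \<Rightarrow> complex" where "DD' z h = of_real (8 * Im z * Im h)"

lemma DD_has_derivative: "(DD has_derivative DD' z) (at z)"
proof -
  have "((\<lambda>y. of_real (4 * (Im y)^2) :: complex) has_derivative
      (\<lambda>h. of_real (4 * (of_nat 2 * Im h * (Im z)^(2-1))))) (at z)"
    by (intro has_derivative_of_real has_derivative_mult_right has_derivative_power has_derivative_Im has_derivative_ident)
  moreover have "(\<lambda>h. of_real (4 * (of_nat 2 * Im h * (Im z)^(2-1))) :: complex) = DD' z"
    by (auto simp: DD'_def fun_eq_iff)
  ultimately show ?thesis unfolding DD_def[abs_def] by simp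
qed

lemma DD_nz: "Im z > 0 \<Longrightarrow> DD z \<noteq> 0" by (simp add: DD_def)

definition Th :: "complex \<Rightarrow> real \<Rightarrow> (complex \<Rightarrow> complex) \<Rightarrow> complex \<Rightarrow> complex" where
  "Th \<tau> x \<phi> z = kk \<tau> z x * (\<phi> z / DD z)"

definition Th' :: "complex \<Rightarrow> real \<Rightarrow> (complex \<Rightarrow> complex) \<Rightarrow> (complex \<Rightarrow> complex \<Rightarrow> complex) \<Rightarrow> complex \<Rightarrow> complex \<Rightarrow> complex" where
  "Th' \<tau> x \<phi> \<phi>' z h = \<tau> * of_real (wvd z x h) * kk (\<tau> - 1) z x * (\<phi> z / DD z)
      + kk \<tau> z x * ((\<phi>' z h * DD z - \<phi> z * DD' z h) / (DD z * DD z))"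

lemma Th_has_derivative:
  assumes z: "Im z > 0" and \<phi>: "(\<phi> has_derivative \<phi>' z) (at z)"
  shows "(Th \<tau> x \<phi> has_derivative Th' \<tau> x \<phi> \<phi>' z) (at z)"
proof -
  have "((\<lambda>y. kk \<tau> y x * (\<phi> y / DD y)) has_derivative
      (\<lambda>h. kk \<tau> z x * ((\<phi>' z h * DD z - \<phi> z * DD' z h) / (DD z * DD z)) +
           \<tau> * of_real (wvd z x h) * kk (\<tau> - 1) z x * (\<phi> z / DD z))) (at z)"
    by (intro has_derivative_mult kk_has_derivative_z z has_derivative_divide' \<phi> DD_has_derivative DD_nz)
  thus ?thesis unfolding Th_def[abs_def] Th'_def by (simp add: add.commute)
qed

lemma kk_cont_z: "continuous_on Lam (\<lambda>z. kk \<sigma> z x)"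
proof -
  have "continuous_on Lam (\<lambda>z. (\<lambda>p. kk (fst p - 0) (fst (snd p)) (snd (snd p))) (\<sigma>, z, x))"
    by (rule continuous_on_compose2[OF kk_cont]) (auto intro!: continuous_intros)
  thus ?thesis by simp
qed

lemma wvd_cont: "continuous_on Lam (\<lambda>z. wvd z x h)"
  unfolding wvd_def by (intro continuous_intros) (auto simp: Lam_def)

lemma Th'_cont:
  assumes "continuous_on Lam \<phi>" "continuous_on Lam (\<lambda>z. \<phi>' z h)"
  shows "continuous_on Lam (\<lambda>z. Th' \<tau> x \<phi> \<phi>' z h)"
  unfolding Th'_def DD_def DD'_def
  by (intro continuous_intros kk_cont_z wvd_cont assms) (auto simp: Lam_def)

lemma stage1_Dz:
  assumes z: "Im z > 0" and d1: "\<phi>' z 1 = a'" and di: "\<phi>' z \<i> = \<i> * a'"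
  shows "- ((Th' \<tau> x \<phi> \<phi>' z 1 - \<i> * Th' \<tau> x \<phi> \<phi>' z \<i>) / 2) * DD z
    = kk (\<tau> - 1) z x * ((2*\<i>/(z - cnj z)^2) * (of_real x - cnj z) *
       (- a' * (z - cnj z) * (of_real x - z) + \<tau> * \<phi> z * (z - cnj z) + (\<tau> + 2) * \<phi> z * (of_real x - z)))"
proof -
  obtain A B where zAB: "z = Complex A B" by (cases z)
  have B: "B > 0" using z zAB by simp
  define K where "K = kk (\<tau> - 1) z x"
  define a where "a = \<phi> z"
  have k: "kk \<tau> z x = of_real (wv z x) * K" unfolding K_def by (rule kk_minus1[OF z])
  have c1: "cnj z = of_real A - \<i> * of_real B" and c2: "z = of_real A + \<i> * of_real B"
    using zAB by (simp_all add: Complex_eq)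
  have nB: "(of_real B :: complex) \<noteq> 0" using B by simp
  show ?thesis
    unfolding Th'_def k d1 di a_def[symmetric] K_def[symmetric]
    unfolding c1 DD_def DD'_def wvd_def wv_def
    unfolding zAB[symmetric] c2
    using nB by (simp add: field_simps power2_eq_square zAB)
qed

lemma stage1_Dzb:
  assumes z: "Im z > 0" and d1: "\<phi>' z 1 = a'" and di: "\<phi>' z \<i> = - \<i> * a'"
  shows "- ((Th' \<tau> x \<phi> \<phi>' z 1 + \<i> * Th' \<tau> x \<phi> \<phi>' z \<i>) / 2) * DD z
    = kk (\<tau> - 1) z x * ((2*\<i>/(z - cnj z)^2) * (of_real x - z) *
       (- a' * (z - cnj z) * (of_real x - cnj z) + \<tau> * \<phi> z * (z - cnj z) - (\<tau> + 2) * \<phi> z * (of_real x - cnj z)))"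
proof -
  obtain A B where zAB: "z = Complex A B" by (cases z)
  have B: "B > 0" using z zAB by simp
  define K where "K = kk (\<tau> - 1) z x"
  define a where "a = \<phi> z"
  have k: "kk \<tau> z x = of_real (wv z x) * K" unfolding K_def by (rule kk_minus1[OF z])
  have c1: "cnj z = of_real A - \<i> * of_real B" and c2: "z = of_real A + \<i> * of_real B"
    using zAB by (simp_all add: Complex_eq)
  have nB: "(of_real B :: complex) \<noteq> 0" using B by simp
  show ?thesis
    unfolding Th'_def k d1 di a_def[symmetric] K_def[symmetric]
    unfolding c1 DD_def DD'_def wvd_def wv_def
    unfolding zAB[symmetric] c2
    using nB by (simp add: field_simps power2_eq_square zAB)
qed

section \<open>The six first-order operators\<close>

definition mm :: "nat \<Rightarrow> nat \<Rightarrow> complex \<Rightarrow> complex" where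
  "mm p q z = z^p * cnj z^q / (z - cnj z)^2"

type_synonym eentry = "nat \<times> nat \<times> complex \<times> nat \<times> nat"

definition sumE :: "eentry list \<Rightarrow> complex \<Rightarrow> complex \<Rightarrow> complex \<Rightarrow> complex" where
  "sumE Lst X t z = (\<Sum>(j,e,c,p,q)\<leftarrow>Lst. X^j * t^e * c * mm p q z)"

definition sumE' :: "eentry list \<Rightarrow> complex \<Rightarrow> complex \<Rightarrow> complex \<Rightarrow> complex \<Rightarrow> complex" where
  "sumE' Lst X t Z d = (\<Sum>(j,e,c,p,q)\<leftarrow>Lst. X^j * t^e * c * (Z^p * (Z - d)^q / d^2))"

lemma sumE_sumE': "sumE Lst X t z = sumE' Lst X t z (z - cnj z)"
  unfolding sumE_def sumE'_def mm_def by simp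

definition FE :: "eentry list \<Rightarrow> (complex \<Rightarrow> complex) \<Rightarrow> complex \<Rightarrow> real \<Rightarrow> complex" where
  "FE Lst g \<tau> x = (\<Sum>(j,e,c,p,q)\<leftarrow>Lst. of_real x ^ j * \<tau> ^ e * c * J (\<lambda>z. mm p q z * g z) (\<tau> - 1) x)"

lemma MJ_mm: "p \<le> 2 \<Longrightarrow> q \<le> 2 \<Longrightarrow> MJ (mm p q)"
  using MJ_mono[of p 2 q] unfolding mm_def[abs_def] by simp

lemma nice_pow: "nice (\<lambda>t. t ^ e * c)"
  using nice_mult[OF nice_poly[of "monom 1 e"] nice_const[of c]] by (simp add: poly_monom)

lemma JR_FE:
  assumes "\<forall>(j,e,c,p,q)\<in>set Lst. p \<le> 2 \<and> q \<le> 2"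
  shows "JR (FE Lst)"
  using assms
proof (induction Lst)
  case Nil thus ?case by (simp add: FE_def JR_zero)
next
  case (Cons en Lst)
  obtain j e c p q where en: "en = (j,e,c,p,q)" by (cases en)
  have pq: "p \<le> 2" "q \<le> 2" using Cons.prems en by auto
  have "JR (\<lambda>g. J (\<lambda>z. mm p q z * g z))" using MJ_mm[OF pq] unfolding MJ_def by blast
  hence "JR (\<lambda>g \<tau> x. of_real x ^ j * ((\<lambda>t. t ^ e * c) \<tau> * J (\<lambda>z. mm p q z * g z) (\<tau> + of_int (-1)) x))"
    by (intro JR_xmul JR_scale nice_pow JR_shift)
  hence t: "JR (\<lambda>g \<tau> x. of_real x ^ j * \<tau> ^ e * c * J (\<lambda>z. mm p q z * g z) (\<tau> - 1) x)"
    by (rule JR_cong) (simp add: algebra_simps)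
  have "JR (\<lambda>g \<tau> x. of_real x ^ j * \<tau> ^ e * c * J (\<lambda>z. mm p q z * g z) (\<tau> - 1) x + FE Lst g \<tau> x)"
    using JR_add[OF t Cons.IH] Cons.prems by simp
  thus ?case by (rule JR_cong) (simp add: FE_def en)
qed

lemma FE_has_integral:
  assumes g: "test_fun g" and pq: "\<forall>(j,e,c,p,q)\<in>set Lst. p \<le> 2 \<and> q \<le> 2"
  shows "((\<lambda>z. sumE Lst (of_real x) \<tau> z * (Kern (\<tau> - 1) z x * g z / of_real (4 * (Im z)^2))) has_integral FE Lst g \<tau> x) Lam"
  using pq
proof (induction Lst)
  case Nil thus ?case by (simp add: FE_def sumE_def)
next
  case (Cons en Lst)
  obtain j e c p q where en: "en = (j,e,c,p,q)" by (cases en)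
  have pq: "p \<le> 2" "q \<le> 2" using Cons.prems en by auto
  have tg: "test_fun (\<lambda>z. mm p q z * g z)" using MJ_mm[OF pq] g unfolding MJ_def by blast
  have I: "((\<lambda>z. Kern (\<tau> - 1) z x * (mm p q z * g z) / of_real (4 * (Im z)^2)) has_integral
      J (\<lambda>z. mm p q z * g z) (\<tau> - 1) x) Lam"
    using L1_main(1,2)[OF tg, of 0 "\<tau> - 1" x] by (simp add: KD_def integrable_integral)
  have "((\<lambda>z. (of_real x ^ j * \<tau> ^ e * c) * (Kern (\<tau> - 1) z x * (mm p q z * g z) / of_real (4 * (Im z)^2))) has_integral
      (of_real x ^ j * \<tau> ^ e * c) * J (\<lambda>z. mm p q z * g z) (\<tau> - 1) x) Lam"
    by (rule has_integral_mult_right[OF I])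
  from has_integral_add[OF this Cons.IH] Cons.prems
  show ?case by (simp add: en FE_def sumE_def algebra_simps add_divide_distrib)
qed

lemma alg_helper:
  fixes W Dn K S G :: complex
  assumes "Dn \<noteq> 0" "- W * Dn = K * S"
  shows "- (W * G) = S * (K * G / Dn)"
proof -
  have "Dn * W = - (K * S)" using assms(2) by (simp add: algebra_simps minus_equation_iff[of "Dn * W"])
  hence "K * S = - (Dn * W)" by simp
  have "S * (K * G / Dn) = (K * S) * G / Dn" by (simp add: algebra_simps)
  also have "\<dots> = - (Dn * (W * G)) / Dn" using \<open>K * S = - (Dn * W)\<close> by (simp add: algebra_simps)
  also have "\<dots> = - (W * G)" using assms(1) by simp
  finally show ?thesis by simp
qed

lemma OPJ_Dz:
  assumes \<phi>d: "\<And>z. Im z > 0 \<Longrightarrow> (\<phi> has_derivative \<phi>' z) (at z)"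
    and d1: "\<And>z. Im z > 0 \<Longrightarrow> \<phi>' z 1 = a' z" and di: "\<And>z. Im z > 0 \<Longrightarrow> \<phi>' z \<i> = \<i> * a' z"
    and \<phi>'c: "\<And>h. continuous_on Lam (\<lambda>z. \<phi>' z h)"
    and st2: "\<And>z X t. Im z > 0 \<Longrightarrow> (2*\<i>/(z - cnj z)^2) * (X - cnj z) *
       (- a' z * (z - cnj z) * (X - z) + t * \<phi> z * (z - cnj z) + (t + 2) * \<phi> z * (X - z)) = sumE Lst X t z"
    and pq: "\<forall>(j,e,c,p,q)\<in>set Lst. p \<le> 2 \<and> q \<le> 2"
  shows "JR (\<lambda>g. J (\<lambda>z. \<phi> z * Dz g z))"
proof (rule JR_cong[OF JR_FE[OF pq]])
  fix g \<tau> x assume g: "test_fun g"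
  have TD: "\<And>z. z \<in> Lam \<Longrightarrow> (Th \<tau> x \<phi> has_derivative Th' \<tau> x \<phi> \<phi>' z) (at z)"
    using Th_has_derivative \<phi>d by (auto simp: Lam_def)
  have \<phi>c: "continuous_on Lam \<phi>"
    by (intro continuous_at_imp_continuous_on ballI has_derivative_continuous[OF \<phi>d]) (auto simp: Lam_def)
  have TC: "\<And>v. continuous_on Lam (\<lambda>z. Th' \<tau> x \<phi> \<phi>' z v)"
    by (rule Th'_cont[OF \<phi>c \<phi>'c])
  obtain I where I1: "((\<lambda>z. Th \<tau> x \<phi> z * Dz g z) has_integral - I) Lam"
    and I2: "((\<lambda>z. (Th' \<tau> x \<phi> \<phi>' z 1 - \<i> * Th' \<tau> x \<phi> \<phi>' z \<i>) / 2 * g z) has_integral I) Lam"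
    using IBP_Dz[OF g TD TC] by blast
  have "J (\<lambda>z. \<phi> z * Dz g z) \<tau> x = integral Lam (\<lambda>z. Th \<tau> x \<phi> z * Dz g z)"
    unfolding J_def
    by (rule integral_cong) (auto simp: Lam_def Kern_eq Th_def DD_def)
  also have "\<dots> = - I" using I1 by (rule integral_unique)
  finally have L: "J (\<lambda>z. \<phi> z * Dz g z) \<tau> x = - I" .
  have hI: "((\<lambda>z. - ((Th' \<tau> x \<phi> \<phi>' z 1 - \<i> * Th' \<tau> x \<phi> \<phi>' z \<i>) / 2 * g z)) has_integral - I) Lam"
    by (rule has_integral_neg[OF I2])
  have eqp: "- ((Th' \<tau> x \<phi> \<phi>' z 1 - \<i> * Th' \<tau> x \<phi> \<phi>' z \<i>) / 2 * g z) =
      sumE Lst (of_real x) \<tau> z * (Kern (\<tau> - 1) z x * g z / of_real (4 * (Im z)^2))" if z: "z \<in> Lam" for z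
  proof -
    have z': "Im z > 0" using z by (simp add: Lam_def)
    have "- ((Th' \<tau> x \<phi> \<phi>' z 1 - \<i> * Th' \<tau> x \<phi> \<phi>' z \<i>) / 2) * DD z = kk (\<tau> - 1) z x * sumE Lst (of_real x) \<tau> z"
      using stage1_Dz[where \<phi>'="\<phi>'" and z=z and a'="a' z" and \<tau>=\<tau> and x=x and \<phi>=\<phi>, OF z' d1[OF z'] di[OF z']]
      unfolding st2[OF z'] .
    from alg_helper[OF DD_nz[OF z'] this, of "g z"]
    show ?thesis unfolding Kern_eq[OF z'] DD_def .
  qed
  have "((\<lambda>z. sumE Lst (of_real x) \<tau> z * (Kern (\<tau> - 1) z x * g z / of_real (4 * (Im z)^2))) has_integral - I) Lam"
    using has_integral_eq[OF eqp hI] .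
  hence "FE Lst g \<tau> x = - I" using FE_has_integral[OF g pq] by (rule has_integral_unique[rotated])
  thus "FE Lst g \<tau> x = J (\<lambda>z. \<phi> z * Dz g z) \<tau> x" using L by simp
qed

lemma OPJ_Dzb:
  assumes \<phi>d: "\<And>z. Im z > 0 \<Longrightarrow> (\<phi> has_derivative \<phi>' z) (at z)"
    and d1: "\<And>z. Im z > 0 \<Longrightarrow> \<phi>' z 1 = a' z" and di: "\<And>z. Im z > 0 \<Longrightarrow> \<phi>' z \<i> = - \<i> * a' z"
    and \<phi>'c: "\<And>h. continuous_on Lam (\<lambda>z. \<phi>' z h)"
    and st2: "\<And>z X t. Im z > 0 \<Longrightarrow> (2*\<i>/(z - cnj z)^2) * (X - z) *
       (- a' z * (z - cnj z) * (X - cnj z) + t * \<phi> z * (z - cnj z) - (t + 2) * \<phi> z * (X - cnj z)) = sumE Lst X t z"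
    and pq: "\<forall>(j,e,c,p,q)\<in>set Lst. p \<le> 2 \<and> q \<le> 2"
  shows "JR (\<lambda>g. J (\<lambda>z. \<phi> z * Dzb g z))"
proof (rule JR_cong[OF JR_FE[OF pq]])
  fix g \<tau> x assume g: "test_fun g"
  have TD: "\<And>z. z \<in> Lam \<Longrightarrow> (Th \<tau> x \<phi> has_derivative Th' \<tau> x \<phi> \<phi>' z) (at z)"
    using Th_has_derivative \<phi>d by (auto simp: Lam_def)
  have \<phi>c: "continuous_on Lam \<phi>"
    by (intro continuous_at_imp_continuous_on ballI has_derivative_continuous[OF \<phi>d]) (auto simp: Lam_def)
  have TC: "\<And>v. continuous_on Lam (\<lambda>z. Th' \<tau> x \<phi> \<phi>' z v)"
    by (rule Th'_cont[OF \<phi>c \<phi>'c])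
  obtain I where I1: "((\<lambda>z. Th \<tau> x \<phi> z * Dzb g z) has_integral - I) Lam"
    and I2: "((\<lambda>z. (Th' \<tau> x \<phi> \<phi>' z 1 + \<i> * Th' \<tau> x \<phi> \<phi>' z \<i>) / 2 * g z) has_integral I) Lam"
    using IBP_Dzb[OF g TD TC] by blast
  have "J (\<lambda>z. \<phi> z * Dzb g z) \<tau> x = integral Lam (\<lambda>z. Th \<tau> x \<phi> z * Dzb g z)"
    unfolding J_def
    by (rule integral_cong) (auto simp: Lam_def Kern_eq Th_def DD_def)
  also have "\<dots> = - I" using I1 by (rule integral_unique)
  finally have L: "J (\<lambda>z. \<phi> z * Dzb g z) \<tau> x = - I" .
  have hI: "((\<lambda>z. - ((Th' \<tau> x \<phi> \<phi>' z 1 + \<i> * Th' \<tau> x \<phi> \<phi>' z \<i>) / 2 * g z)) has_integral - I) Lam"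
    by (rule has_integral_neg[OF I2])
  have eqp: "- ((Th' \<tau> x \<phi> \<phi>' z 1 + \<i> * Th' \<tau> x \<phi> \<phi>' z \<i>) / 2 * g z) =
      sumE Lst (of_real x) \<tau> z * (Kern (\<tau> - 1) z x * g z / of_real (4 * (Im z)^2))" if z: "z \<in> Lam" for z
  proof -
    have z': "Im z > 0" using z by (simp add: Lam_def)
    have "- ((Th' \<tau> x \<phi> \<phi>' z 1 + \<i> * Th' \<tau> x \<phi> \<phi>' z \<i>) / 2) * DD z = kk (\<tau> - 1) z x * sumE Lst (of_real x) \<tau> z"
      using stage1_Dzb[where \<phi>'="\<phi>'" and z=z and a'="a' z" and \<tau>=\<tau> and x=x and \<phi>=\<phi>, OF z' d1[OF z'] di[OF z']]
      unfolding st2[OF z'] .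
    from alg_helper[OF DD_nz[OF z'] this, of "g z"]
    show ?thesis unfolding Kern_eq[OF z'] DD_def .
  qed
  have "((\<lambda>z. sumE Lst (of_real x) \<tau> z * (Kern (\<tau> - 1) z x * g z / of_real (4 * (Im z)^2))) has_integral - I) Lam"
    using has_integral_eq[OF eqp hI] .
  hence "FE Lst g \<tau> x = - I" using FE_has_integral[OF g pq] by (rule has_integral_unique[rotated])
  thus "FE Lst g \<tau> x = J (\<lambda>z. \<phi> z * Dzb g z) \<tau> x" using L by simp
qed


definition LZ0 :: "eentry list" where
  "LZ0 = [(2,0,4*\<i>,0,0),(2,1,2*\<i>,0,0),(1,0,-4*\<i>,1,0),(1,0,-4*\<i>,0,1),(1,1,-4*\<i>,0,1),(0,0,4*\<i>,1,1),(0,1,2*\<i>,0,2)]"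
definition LZ1 :: "eentry list" where
  "LZ1 = [(2,0,2*\<i>,1,0),(2,0,2*\<i>,0,1),(2,1,2*\<i>,1,0),(1,0,-2*\<i>,2,0),(1,0,-4*\<i>,1,1),(1,0,-2*\<i>,0,2),(1,1,-4*\<i>,1,1),(0,0,2*\<i>,2,1),(0,0,2*\<i>,1,2),(0,1,2*\<i>,1,2)]"
definition LZ2 :: "eentry list" where
  "LZ2 = [(2,0,4*\<i>,1,1),(2,1,2*\<i>,2,0),(1,0,-4*\<i>,2,1),(1,0,-4*\<i>,1,2),(1,1,-4*\<i>,2,1),(0,0,4*\<i>,2,2),(0,1,2*\<i>,2,2)]"
definition LB0 :: "eentry list" where
  "LB0 = [(2,0,-4*\<i>,0,0),(2,1,-2*\<i>,0,0),(1,0,4*\<i>,1,0),(1,0,4*\<i>,0,1),(1,1,4*\<i>,1,0),(0,0,-4*\<i>,1,1),(0,1,-2*\<i>,2,0)]"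
definition LB1 :: "eentry list" where
  "LB1 = [(2,0,-2*\<i>,1,0),(2,0,-2*\<i>,0,1),(2,1,-2*\<i>,0,1),(1,0,2*\<i>,2,0),(1,0,4*\<i>,1,1),(1,0,2*\<i>,0,2),(1,1,4*\<i>,1,1),(0,0,-2*\<i>,2,1),(0,0,-2*\<i>,1,2),(0,1,-2*\<i>,2,1)]"
definition LB2 :: "eentry list" where
  "LB2 = [(2,0,-4*\<i>,1,1),(2,1,-2*\<i>,0,2),(1,0,4*\<i>,2,1),(1,0,4*\<i>,1,2),(1,1,4*\<i>,1,2),(0,0,-4*\<i>,2,2),(0,1,-2*\<i>,2,2)]"

lemma pq_LZ0: "\<forall>(j,e,c,p,q)\<in>set LZ0. p \<le> 2 \<and> q \<le> 2" by (simp add: LZ0_def)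
lemma pq_LZ1: "\<forall>(j,e,c,p,q)\<in>set LZ1. p \<le> 2 \<and> q \<le> 2" by (simp add: LZ1_def)
lemma pq_LZ2: "\<forall>(j,e,c,p,q)\<in>set LZ2. p \<le> 2 \<and> q \<le> 2" by (simp add: LZ2_def)
lemma pq_LB0: "\<forall>(j,e,c,p,q)\<in>set LB0. p \<le> 2 \<and> q \<le> 2" by (simp add: LB0_def)
lemma pq_LB1: "\<forall>(j,e,c,p,q)\<in>set LB1. p \<le> 2 \<and> q \<le> 2" by (simp add: LB1_def)
lemma pq_LB2: "\<forall>(j,e,c,p,q)\<in>set LB2. p \<le> 2 \<and> q \<le> 2" by (simp add: LB2_def)

lemma AZ0: "d \<noteq> 0 \<Longrightarrow> (2*\<i>/d^2) * (X - (Z - d)) * (- 0 * d * (X - Z) + t * 1 * d + (t+2) * 1 * (X - Z))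
  = sumE' LZ0 X t Z d"
  by (simp add: LZ0_def sumE'_def field_simps power2_eq_square)
lemma AZ1: "d \<noteq> 0 \<Longrightarrow> (2*\<i>/d^2) * (X - (Z - d)) * (- 1 * d * (X - Z) + t * Z * d + (t+2) * Z * (X - Z))
  = sumE' LZ1 X t Z d"
  by (simp add: LZ1_def sumE'_def field_simps power2_eq_square)
lemma AZ2: "d \<noteq> 0 \<Longrightarrow> (2*\<i>/d^2) * (X - (Z - d)) * (- (2*Z) * d * (X - Z) + t * Z^2 * d + (t+2) * Z^2 * (X - Z))
  = sumE' LZ2 X t Z d"
  by (simp add: LZ2_def sumE'_def field_simps power2_eq_square)
lemma AB0: "d \<noteq> 0 \<Longrightarrow> (2*\<i>/d^2) * (X - Z) * (- 0 * d * (X - (Z - d)) + t * 1 * d - (t+2) * 1 * (X - (Z - d)))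
  = sumE' LB0 X t Z d"
  by (simp add: LB0_def sumE'_def field_simps power2_eq_square)
lemma AB1: "d \<noteq> 0 \<Longrightarrow> (2*\<i>/d^2) * (X - Z) * (- 1 * d * (X - (Z - d)) + t * (Z - d) * d - (t+2) * (Z - d) * (X - (Z - d)))
  = sumE' LB1 X t Z d"
  by (simp add: LB1_def sumE'_def field_simps power2_eq_square)
lemma AB2: "d \<noteq> 0 \<Longrightarrow> (2*\<i>/d^2) * (X - Z) * (- (2*(Z - d)) * d * (X - (Z - d)) + t * (Z - d)^2 * d - (t+2) * (Z - d)^2 * (X - (Z - d)))
  = sumE' LB2 X t Z d"
  by (simp add: LB2_def sumE'_def field_simps power2_eq_square)

lemma dnz: "Im z > 0 \<Longrightarrow> z - cnj z \<noteq> 0"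
  unfolding zcnj by simp

definition OK :: "((complex \<Rightarrow> complex) \<Rightarrow> (complex \<Rightarrow> complex)) \<Rightarrow> bool" where
  "OK T \<longleftrightarrow> (\<forall>g. test_fun g \<longrightarrow> test_fun (T g)) \<and> JR (\<lambda>g. J (T g))"

lemma OK_id: "OK (\<lambda>g. g)"
  unfolding OK_def using JR_J by (simp add: eta_contract_eq)

lemma OK_comp: "OK T1 \<Longrightarrow> OK T2 \<Longrightarrow> OK (T1 \<circ> T2)"
  unfolding OK_def using JR_comp'[of "\<lambda>g. J (T1 g)" T2] by auto

lemma OK_pow: "OK T \<Longrightarrow> OK (T ^^ n)"
proof (induction n)
  case 0 thus ?case using OK_id by (simp add: id_def)
next
  case (Suc n) show ?case unfolding funpow_Suc_right by (rule OK_comp[OF Suc.IH[OF Suc.prems] Suc.prems])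
qed

lemma OK_opZ0: "OK opZ0"
proof -
  have "JR (\<lambda>g. J (\<lambda>z. (\<lambda>z. 1) z * Dz g z))"
  proof (rule OPJ_Dz[where \<phi>' = "\<lambda>z h. 0" and a' = "\<lambda>z. 0" and Lst = LZ0])
    fix z X t assume z: "Im z > 0"
    show "(2*\<i>/(z - cnj z)^2) * (X - cnj z) * (- 0 * (z - cnj z) * (X - z) + t * 1 * (z - cnj z) + (t + 2) * 1 * (X - z)) = sumE LZ0 X t z"
      using AZ0[OF dnz[OF z], of X z t] by (simp add: sumE_sumE')
  qed (auto simp: pq_LZ0 continuous_on_const)
  moreover have "(\<lambda>g. J (\<lambda>z. (\<lambda>z. 1) z * Dz g z)) = (\<lambda>g. J (opZ0 g))"
    by (simp add: opZ0_def eta_contract_eq)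
  ultimately show ?thesis unfolding OK_def by (auto simp: opZ0_def test_Dz)
qed

lemma OK_opZ1: "OK opZ1"
proof -
  have "JR (\<lambda>g. J (\<lambda>z. (\<lambda>z. z) z * Dz g z))"
  proof (rule OPJ_Dz[where \<phi>' = "\<lambda>z h. h" and a' = "\<lambda>z. 1" and Lst = LZ1])
    fix z X t assume z: "Im z > 0"
    show "(2*\<i>/(z - cnj z)^2) * (X - cnj z) * (- 1 * (z - cnj z) * (X - z) + t * z * (z - cnj z) + (t + 2) * z * (X - z)) = sumE LZ1 X t z"
      using AZ1[OF dnz[OF z], of X z t] by (simp add: sumE_sumE')
  qed (auto simp: pq_LZ1 continuous_on_const)
  thus ?thesis unfolding OK_def opZ1_def
    using test_mult[OF smooth_id test_Dz] by auto
qed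

lemma OK_opZ2: "OK opZ2"
proof -
  have "JR (\<lambda>g. J (\<lambda>z. (\<lambda>z. z^2) z * Dz g z))"
  proof (rule OPJ_Dz[where \<phi>' = "\<lambda>z h. of_nat 2 * h * z^(2-1)" and a' = "\<lambda>z. 2 * z" and Lst = LZ2])
    fix z X t assume z: "Im z > 0"
    show "(2*\<i>/(z - cnj z)^2) * (X - cnj z) * (- (2 * z) * (z - cnj z) * (X - z) + t * z^2 * (z - cnj z) + (t + 2) * z^2 * (X - z)) = sumE LZ2 X t z"
      using AZ2[OF dnz[OF z], of X z t] by (simp add: sumE_sumE')
  next
    fix z :: complex
    show "((\<lambda>z. z^2) has_derivative (\<lambda>h. of_nat 2 * h * z^(2-1))) (at z)"
      by (intro has_derivative_power has_derivative_ident)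
  qed (auto simp: pq_LZ2 intro!: continuous_intros)
  thus ?thesis unfolding OK_def opZ2_def
    using test_mult[OF smooth_zpow test_Dz] by auto
qed

lemma OK_opB0: "OK opB0"
proof -
  have "JR (\<lambda>g. J (\<lambda>z. (\<lambda>z. 1) z * Dzb g z))"
  proof (rule OPJ_Dzb[where \<phi>' = "\<lambda>z h. 0" and a' = "\<lambda>z. 0" and Lst = LB0])
    fix z X t assume z: "Im z > 0"
    show "(2*\<i>/(z - cnj z)^2) * (X - z) * (- 0 * (z - cnj z) * (X - cnj z) + t * 1 * (z - cnj z) - (t + 2) * 1 * (X - cnj z)) = sumE LB0 X t z"
      using AB0[OF dnz[OF z], of X z t] by (simp add: sumE_sumE')
  qed (auto simp: pq_LB0 continuous_on_const)
  moreover have "(\<lambda>g. J (\<lambda>z. (\<lambda>z. 1) z * Dzb g z)) = (\<lambda>g. J (opB0 g))"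
    by (simp add: opB0_def eta_contract_eq)
  ultimately show ?thesis unfolding OK_def by (auto simp: opB0_def test_Dzb)
qed

lemma OK_opB1: "OK opB1"
proof -
  have "JR (\<lambda>g. J (\<lambda>z. (\<lambda>z. cnj z) z * Dzb g z))"
  proof (rule OPJ_Dzb[where \<phi>' = "\<lambda>z h. cnj h" and a' = "\<lambda>z. 1" and Lst = LB1])
    fix z X t assume z: "Im z > 0"
    show "(2*\<i>/(z - cnj z)^2) * (X - z) * (- 1 * (z - cnj z) * (X - cnj z) + t * cnj z * (z - cnj z) - (t + 2) * cnj z * (X - cnj z)) = sumE LB1 X t z"
      using AB1[OF dnz[OF z], of X z t] by (simp add: sumE_sumE')
  qed (auto simp: pq_LB1 intro!: continuous_intros)
  thus ?thesis unfolding OK_def opB1_def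
    using test_mult[OF smooth_cnj test_Dzb] by auto
qed

lemma OK_opB2: "OK opB2"
proof -
  have "JR (\<lambda>g. J (\<lambda>z. (\<lambda>z. (cnj z)^2) z * Dzb g z))"
  proof (rule OPJ_Dzb[where \<phi>' = "\<lambda>z h. of_nat 2 * cnj h * (cnj z)^(2-1)" and a' = "\<lambda>z. 2 * cnj z" and Lst = LB2])
    fix z X t assume z: "Im z > 0"
    show "(2*\<i>/(z - cnj z)^2) * (X - z) * (- (2 * cnj z) * (z - cnj z) * (X - cnj z) + t * (cnj z)^2 * (z - cnj z) - (t + 2) * (cnj z)^2 * (X - cnj z)) = sumE LB2 X t z"
      using AB2[OF dnz[OF z], of X z t] by (simp add: sumE_sumE')
  next
    fix z :: complex
    show "((\<lambda>z. (cnj z)^2) has_derivative (\<lambda>h. of_nat 2 * cnj h * (cnj z)^(2-1))) (at z)"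
      by (intro has_derivative_power has_derivative_cnj has_derivative_ident)
  qed (auto simp: pq_LB2 intro!: continuous_intros)
  thus ?thesis unfolding OK_def opB2_def
    using test_mult[OF smooth_cnjpow test_Dzb] by auto
qed


lemma OK_mono: "OK (mono_op i)"
proof -
  obtain a b c a' b' c' where i: "i = (a, b, c, a', b', c')" by (cases i) auto
  show ?thesis unfolding mono_op_def i
    by (simp, intro OK_comp OK_pow OK_opZ2 OK_opZ1 OK_opZ0 OK_opB2 OK_opB1 OK_opB0)
qed

lemma J_zero: "J (\<lambda>z. 0) \<tau> x = 0" by (simp add: J_def)

lemma J_sum: "finite I \<Longrightarrow> (\<And>i. i \<in> I \<Longrightarrow> test_fun (h i)) \<Longrightarrow>
    J (\<lambda>z. \<Sum>i\<in>I. h i z) \<tau> x = (\<Sum>i\<in>I. J (h i) \<tau> x)"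
proof (induction I rule: finite_induct)
  case empty thus ?case by (simp add: J_zero)
next
  case (insert i I)
  have "test_fun (\<lambda>z. \<Sum>i\<in>I. h i z)" using insert by (intro test_sum) auto
  hence "J (\<lambda>z. h i z + (\<Sum>i\<in>I. h i z)) \<tau> x = J (h i) \<tau> x + J (\<lambda>z. \<Sum>i\<in>I. h i z) \<tau> x"
    using insert by (intro J_add) (auto simp: eta_contract_eq)
  thus ?case using insert by (simp add: eta_contract_eq)
qed

lemma JR_B:
  assumes "D \<in> B_space"
  shows "JR (\<lambda>g. J (D g))" and "\<And>g. test_fun g \<Longrightarrow> test_fun (D g)"
proof -
  obtain I V where I: "finite I" "\<forall>i\<in>I. V i \<in> A_space"
    and D: "D = (\<lambda>f z. \<Sum>i\<in>I. V i z * mono_op i f z)"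
    using assms unfolding B_space_def by blast
  have MJ: "MJ (V i)" if "i \<in> I" for i using I(2) that MJ_A by blast
  have tc: "test_fun (\<lambda>z. V i z * mono_op i g z)" if "i \<in> I" "test_fun g" for i g
    using MJ[OF that(1)] OK_mono[of i] that(2) unfolding MJ_def OK_def by blast
  show "test_fun (D g)" if "test_fun g" for g
    unfolding D using tc that I(1) by (intro test_sum) auto
  have "JR (\<lambda>g \<tau> x. \<Sum>i\<in>I. J (\<lambda>z. V i z * mono_op i g z) \<tau> x)"
  proof (rule JR_sum[OF I(1)])
    fix i assume i: "i \<in> I"
    have "JR (\<lambda>g. J (\<lambda>z. V i z * g z))" "\<And>g. test_fun g \<Longrightarrow> test_fun (mono_op i g)" "JR (\<lambda>g. J (mono_op i g))"
      using MJ[OF i] OK_mono[of i] unfolding MJ_def OK_def by blast+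
    thus "JR (\<lambda>g. J (\<lambda>z. V i z * mono_op i g z))" using JR_comp' by blast
  qed
  thus "JR (\<lambda>g. J (D g))"
    by (rule JR_cong) (simp add: D J_sum[OF I(1)] tc)
qed

lemma nice_sum: "finite A \<Longrightarrow> (\<And>a. a \<in> A \<Longrightarrow> nice (f a)) \<Longrightarrow> nice (\<lambda>t. \<Sum>a\<in>A. f a t)"
  by (induction A rule: finite_induct) (auto intro: nice_add nice_const)

lemma evalL_group:
  "evalL L \<Phi> \<tau> x = (\<Sum>k\<in>snd ` set L. (\<Sum>i\<in>{i. i < length L \<and> snd (L!i) = k}. fst (L!i) \<tau>) *
      (case k of (p,q,r) \<Rightarrow> of_real x ^ p * xderiv q (\<lambda>y. \<Phi> (\<tau> + of_int r) y) x))"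
proof -
  define F where "F e = (case e of (u,p,q,r) \<Rightarrow> u \<tau> * of_real x ^ p * xderiv q (\<lambda>y. \<Phi> (\<tau> + of_int r) y) x)" for e :: entry
  define G where "G k = (case k of (p,q,r) \<Rightarrow> of_real x ^ p * xderiv q (\<lambda>y. \<Phi> (\<tau> + of_int r) y) x)" for k :: "nat \<times> nat \<times> int"
  have FG: "F e = fst e \<tau> * G (snd e)" for e unfolding F_def G_def by (cases e) auto
  have "evalL L \<Phi> \<tau> x = sum_list (map F L)" unfolding evalL_def F_def by simp
  also have "\<dots> = (\<Sum>i\<in>{..<length L}. F (L!i))"
    by (simp add: sum_list_sum_nth atLeast0LessThan)
  also have "\<dots> = (\<Sum>k\<in>snd ` set L. \<Sum>i\<in>{i. i \<in> {..<length L} \<and> snd (L!i) = k}. F (L!i))"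
    by (rule sum.group[symmetric]) (auto simp: nth_mem)
  also have "\<dots> = (\<Sum>k\<in>snd ` set L. (\<Sum>i\<in>{i. i < length L \<and> snd (L!i) = k}. fst (L!i) \<tau>) * G k)"
    by (intro sum.cong refl) (auto simp: FG sum_distrib_right)
  finally show ?thesis unfolding G_def .
qed

lemma reduce:
  assumes "nice u"
  obtains PQ where "reduced_ratfun PQ" "poles PQ \<subseteq> half_ints" "\<And>t. t \<notin> half_ints \<Longrightarrow> ratval PQ t = u t"
proof -
  define R where "R n \<longleftrightarrow> (\<exists>P Q. degree Q = n \<and> Q \<noteq> 0 \<and> (\<forall>t. poly Q t = 0 \<longrightarrow> t \<in> half_ints) \<and>
      (\<forall>t. t \<notin> half_ints \<longrightarrow> u t = poly P t / poly Q t))" for n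
  have "\<exists>n. R n" using assms unfolding nice_def R_def by blast
  then obtain n where Rn: "R n" by blast
  define n0 where "n0 = (LEAST n. R n)"
  have "R n0" unfolding n0_def by (rule LeastI[of R, OF Rn])
  then obtain P Q where PQ: "degree Q = n0" "Q \<noteq> 0" "\<forall>t. poly Q t = 0 \<longrightarrow> t \<in> half_ints"
      "\<forall>t. t \<notin> half_ints \<longrightarrow> u t = poly P t / poly Q t"
    unfolding R_def by blast
  have cop: "coprime P Q"
  proof (rule coprimeI)
    fix c assume cP: "c dvd P" and cQ: "c dvd Q"
    have c0: "c \<noteq> 0" using cQ PQ(2) by auto
    show "is_unit c"
    proof (rule ccontr)
      assume "\<not> is_unit c"
      hence "degree c \<noteq> 0" using is_unit_iff_degree[OF c0] by blast
      hence "\<not> constant (poly c)" using constant_degree[of c] by simp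
      then obtain z where "poly c z = 0" using fundamental_theorem_of_algebra by blast
      hence lc: "[:- z, 1:] dvd c" using poly_eq_0_iff_dvd by blast
      obtain P1 where P1: "P = [:- z, 1:] * P1" using dvd_trans[OF lc cP] by (auto elim: dvdE)
      obtain Q1 where Q1: "Q = [:- z, 1:] * Q1" using dvd_trans[OF lc cQ] by (auto elim: dvdE)
      have Q10: "Q1 \<noteq> 0" using PQ(2) Q1 by auto
      have dQ: "degree Q = 1 + degree Q1" unfolding Q1 by (subst degree_mult_eq) (use Q10 in auto)
      have "R (degree Q1)" unfolding R_def
      proof (intro exI conjI allI impI)
        show "Q1 \<noteq> 0" by (rule Q10)
        show "t \<in> half_ints" if "poly Q1 t = 0" for t using PQ(3) that Q1 by auto
        fix t assume t: "t \<notin> half_ints"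
        have "poly Q t \<noteq> 0" using PQ(3) t by blast
        hence nz: "poly [:- z, 1:] t \<noteq> 0" using Q1 by auto
        have "u t = poly P t / poly Q t" using PQ(4) t by blast
        also have "\<dots> = (poly [:- z, 1:] t * poly P1 t) / (poly [:- z, 1:] t * poly Q1 t)"
          unfolding P1 Q1 by (simp only: poly_mult)
        also have "\<dots> = poly P1 t / poly Q1 t" using nz by (rule mult_divide_mult_cancel_left)
        finally show "u t = poly P1 t / poly Q1 t" .
      qed rule
      hence "n0 \<le> degree Q1" unfolding n0_def by (rule Least_le)
      thus False using dQ PQ(1) by simp
    qed
  qed
  show ?thesis
  proof (rule that[of "(P, Q)"])
    show "reduced_ratfun (P, Q)" unfolding reduced_ratfun_def using PQ(2) cop by simp
    show "poles (P, Q) \<subseteq> half_ints" using PQ(3) by (auto simp: poles_def)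
    fix t assume "t \<notin> half_ints"
    thus "ratval (P, Q) t = u t" using PQ(4) by (simp add: ratval_def)
  qed
qed

lemma half_ints_Im: assumes "t \<in> half_ints" shows "Im t = 0"
proof -
  obtain k where k: "t = of_int k / 2" using assms unfolding half_ints_iff by blast
  show ?thesis unfolding k by (simp add: Im_divide)
qed

lemma cont_xd: "test_fun f \<Longrightarrow> isCont (\<lambda>\<tau>. xderiv q (\<lambda>y. J f (\<tau> + of_int r) y) x) t"
proof -
  assume f: "test_fun f"
  have "isCont (\<lambda>\<sigma>. xderiv q (J f \<sigma>) x) (t + of_int r)"
    using L1_main(4)[OF f, of q x] continuous_on_eq_continuous_at[OF open_UNIV] by blast
  moreover have c1: "isCont (\<lambda>\<tau>. \<tau> + of_int r) t" by simp
  ultimately have "isCont (\<lambda>\<tau>. (\<lambda>\<sigma>. xderiv q (J f \<sigma>) x) ((\<lambda>\<tau>. \<tau> + of_int r) \<tau>)) t"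
    using isCont_o2[OF c1] by blast
  thus ?thesis by (simp add: eta_contract_eq)
qed

theorem theorem3:
  assumes "D \<in> B_space"
  shows "\<exists>S U. finite S \<and>
     (\<forall>i\<in>S. reduced_ratfun (U i) \<and> poles (U i) \<subseteq> half_ints) \<and>
     (\<forall>f \<tau> x. test_fun f \<longrightarrow> (\<forall>i\<in>S. \<tau> \<notin> poles (U i)) \<longrightarrow>
        J (D f) \<tau> x = Dprime_apply S U (J f) \<tau> x)"
proof -
  obtain L where nL: "niceL L"
    and eqL: "\<And>g \<tau> x. test_fun g \<Longrightarrow> \<tau> \<notin> half_ints \<Longrightarrow> J (D g) \<tau> x = evalL L (J g) \<tau> x"
    using JR_B(1)[OF assms] unfolding JR_def by blast
  define S where "S = snd ` set L"
  define uk where "uk k t = (\<Sum>i\<in>{i. i < length L \<and> snd (L!i) = k}. fst (L!i) t)" for k t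
  have nk: "nice (uk k)" for k
    unfolding uk_def[abs_def]
    by (rule nice_sum) (use nL in \<open>auto simp: niceL_def nth_mem\<close>)
  have "\<forall>k. \<exists>PQ. reduced_ratfun PQ \<and> poles PQ \<subseteq> half_ints \<and> (\<forall>t. t \<notin> half_ints \<longrightarrow> ratval PQ t = uk k t)"
  proof
    fix k
    obtain PQ where "reduced_ratfun PQ" "poles PQ \<subseteq> half_ints" "\<And>t. t \<notin> half_ints \<Longrightarrow> ratval PQ t = uk k t"
      using reduce[OF nk[of k]] by blast
    thus "\<exists>PQ. reduced_ratfun PQ \<and> poles PQ \<subseteq> half_ints \<and> (\<forall>t. t \<notin> half_ints \<longrightarrow> ratval PQ t = uk k t)" by blast
  qed
  then obtain U where U: "\<And>k. reduced_ratfun (U k)" "\<And>k. poles (U k) \<subseteq> half_ints"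
    "\<And>k t. t \<notin> half_ints \<Longrightarrow> ratval (U k) t = uk k t"
    using choice[of "\<lambda>k PQ. reduced_ratfun PQ \<and> poles PQ \<subseteq> half_ints \<and> (\<forall>t. t \<notin> half_ints \<longrightarrow> ratval PQ t = uk k t)"]
    by blast
  have fin: "finite S" unfolding S_def by simp
  have gen: "J (D f) \<tau> x = Dprime_apply S U (J f) \<tau> x" if f: "test_fun f" and t: "\<tau> \<notin> half_ints" for f \<tau> x
  proof -
    have "J (D f) \<tau> x = evalL L (J f) \<tau> x" by (rule eqL[OF f t])
    also have "\<dots> = (\<Sum>k\<in>S. uk k \<tau> *
      (case k of (p,q,r) \<Rightarrow> of_real x ^ p * xderiv q (\<lambda>y. J f (\<tau> + of_int r) y) x))"
      unfolding evalL_group S_def uk_def ..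
    also have "\<dots> = Dprime_apply S U (J f) \<tau> x"
      unfolding Dprime_apply_def
      by (intro sum.cong refl) (auto simp: U(3)[OF t] mult.assoc)
    finally show ?thesis .
  qed
  show ?thesis
  proof (intro exI conjI allI impI ballI)
    show "finite S" by (rule fin)
    fix i show "reduced_ratfun (U i)" "poles (U i) \<subseteq> half_ints" using U by blast+
  next
    fix f \<tau>0 x assume f: "test_fun f" and np: "\<forall>i\<in>S. \<tau>0 \<notin> poles (U i)"
    show "J (D f) \<tau>0 x = Dprime_apply S U (J f) \<tau>0 x"
    proof (cases "\<tau>0 \<in> half_ints")
      case False thus ?thesis using gen[OF f] by blast
    next
      case True
      have Df: "test_fun (D f)" by (rule JR_B(2)[OF assms f])
      have "continuous_on UNIV (\<lambda>\<tau>. J (D f) \<tau> x)"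
        using L1_main(4)[OF Df, of 0 x] by simp
      hence cL: "isCont (\<lambda>\<tau>. J (D f) \<tau> x) \<tau>0"
        using continuous_on_eq_continuous_at[OF open_UNIV] by blast
      have cR: "isCont (\<lambda>\<tau>. Dprime_apply S U (J f) \<tau> x) \<tau>0"
        unfolding Dprime_apply_def
      proof (intro continuous_sum)
        fix k assume k: "k \<in> S"
        obtain p q r where kpqr: "k = (p,q,r)" by (cases k)
        have nz: "poly (snd (U k)) \<tau>0 \<noteq> 0" using np k by (auto simp: poles_def)
        have "isCont (\<lambda>\<tau>. ratval (U k) \<tau>) \<tau>0"
          unfolding ratval_def using nz by (intro isCont_divide poly_isCont)
        hence "isCont (\<lambda>\<tau>. ratval (U (p,q,r)) \<tau> * of_real x ^ p * xderiv q (\<lambda>y. J f (\<tau> + of_int r) y) x) \<tau>0"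
          unfolding kpqr by (intro isCont_mult continuous_const cont_xd[OF f])
        thus "isCont (\<lambda>\<tau>. case k of (p, q, r) \<Rightarrow> ratval (U (p, q, r)) \<tau> * of_real x ^ p * xderiv q (\<lambda>y. J f (\<tau> + of_int r) y) x) \<tau>0"
          by (simp add: kpqr)
      qed
      define s where "s n = \<tau>0 + \<i> * of_real (inverse (real (Suc n)))" for n
      have sl: "s \<longlonglongrightarrow> \<tau>0"
      proof -
        have "(\<lambda>n. \<tau>0 + \<i> * of_real (inverse (real (Suc n)))) \<longlonglongrightarrow> \<tau>0 + \<i> * of_real 0"
          by (intro tendsto_intros LIMSEQ_inverse_real_of_nat)
        thus ?thesis by (simp add: s_def[abs_def])
      qed
      have sn: "s n \<notin> half_ints" for n
      proof
        assume "s n \<in> half_ints"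
        hence "Im (s n) = 0" by (rule half_ints_Im)
        moreover have "Im \<tau>0 = 0" using True by (rule half_ints_Im)
        ultimately show False by (simp add: s_def)
      qed
      have "(\<lambda>n. J (D f) (s n) x) \<longlonglongrightarrow> J (D f) \<tau>0 x"
        by (rule isCont_tendsto_compose[OF cL sl])
      moreover have "(\<lambda>n. Dprime_apply S U (J f) (s n) x) \<longlonglongrightarrow> Dprime_apply S U (J f) \<tau>0 x"
        by (rule isCont_tendsto_compose[OF cR sl])
      moreover have "(\<lambda>n. J (D f) (s n) x) = (\<lambda>n. Dprime_apply S U (J f) (s n) x)"
        using gen[OF f sn] by blast
      ultimately show ?thesis using LIMSEQ_unique by metis
    qed
  qed
qed


end
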